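(* For every semistandard hook-valued tableau $T$ of shape $\lambda$, the recording tableau $Q(T)$ of the uncrowding map $\mathcal U(T)=(P(T),Q(T))$ is a column-flagged increasing tableau.
   Context: French notation: row $1$ is the bottom row, rows numbered upward, columns left to right; cell $(r,c)$ is in row $r$, column $c$. A semistandard tableau of hook shape consists of a hook entry $x$, a leg $\ell_1<\dots<\ell_p$ above $x$ with $x<\ell_1$, and an arm $a_1\le\dots\le a_q$ to the right of $x$ with $x\le a_1$ ($p,q\ge0$, positive integers). A (semistandard) hook-valued tableau (HVT) of partition shape $\lambda$ is a filling of the cells of $\lambda$ by such hook tableaux with $\max(A)\le\min(B)$ whenever the cell of $A$ is left of that of $B$ in the same row, and $\max(A)<\min(C)$ whenever the cell of $A$ is below that of $C$ in the same column. Arm excess = total number of arm entries. A column-flagged increasing tableau of shape $\mu/\lambda$ (where $\lambda\subseteq\mu$ are partitions whose first columns have equal length) is a filling of the cells of $\mu/\lambda$ by positive integers, strictly increasing along rows and along columns, such that every entry in column $j$ is at most $j-1$ (i.e. its transpose is a flagged increasing tableau). Uncrowding bumping $\mathcal V_b$: if arm excess of $T$ is $0$, $\mathcal V_b(T)=T$. Otherwise let $c$ be the largest index of a column containing a cell with nonempty arm; among such cells in column $c$ let $(r,c)$ be the one whose arm contains the largest value. Let $a$ be the largest arm entry of $(r,c)$, $\ell$ its largest leg entry, and $(a,\ell]\cap\mathsf L_T(r,c)$ the set of leg entries $x$ of $(r,c)$ with $a<x\le\ell$. In column $c+1$ find the smallest entry $\ge a$. If none exists, attach a new empty cell on top of column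 $c+1$, with row $\tilde r$, and let $k$ be empty; otherwise let $k$ be this entry and $(\tilde r,c+1)$ its cell. (a) If $\tilde r\ne r$: remove $a$ from the arm of $(r,c)$, put $a$ in the position of $k$ in $(\tilde r,c+1)$ (as hook entry if the cell is new), append $k$ (if nonempty) to the arm of $(\tilde r,c+1)$. (b) If $\tilde r=r$: move $(a,\ell]\cap\mathsf L_T(r,c)$ from the leg of $(r,c)$ into the leg of $(r,c+1)$, remove $a$ from the arm of $(r,c)$, replace the hook entry of $(r,c+1)$ by $a$, append $k$ (if nonempty) to the arm of $(r,c+1)$. Uncrowding insertion: $\mathcal V(T)=\mathcal V_b^d(T)$ where $d\ge1$ is minimal such that $\mathsf{shape}(\mathcal V_b^d(T))\neq\mathsf{shape}(\mathcal V_b^{d-1}(T))$ or $\mathcal V_b^d(T)=\mathcal V_b^{d-1}(T)$. Uncrowding map: for $T\in\mathsf{HVT}(\lambda)$ with arm excess $\alpha$, set $P_0=T$ and $Q_0$ the empty tableau of shape $\lambda/\lambda$; for $1\le i\le\alpha$ let $P_i=\mathcal V(P_{i-1})$, let $c$ be the index of the rightmost column of $P_{i-1}$ containing a cell with nonzero arm excess and $\tilde c$ the column of the cell $\mathsf{shape}(P_i)/\mathsf{shape}(P_{i-1})$; $Q_i$ is $Q_{i-1}$ with this cell added and filled with $\tilde c-c$. Then $\mathcal U(T)=(P(T),Q(T)):=(P_\alpha,Q_\alpha)$. *)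

theory Defs
  imports Main "HOL-Library.Multiset"
begin

text \<open>A semistandard hook tableau: hook entry x, leg l1 < ... < lp (a finite set, all > x),
  arm a1 \<le> ... \<le> aq (a multiset, all \<ge> x). Entries are positive integers.\<close>

record hook =
  hx   :: nat
  hleg :: "nat set"
  harm :: "nat multiset"

definition valid_hook :: "hook \<Rightarrow> bool" where
  "valid_hook h \<longleftrightarrow> 0 < hx h \<and> finite (hleg h) \<and> (\<forall>l\<in>hleg h. hx h < l)
      \<and> (\<forall>a\<in>#harm h. hx h \<le> a)"

definition hook_entries :: "hook \<Rightarrow> nat set" where
  "hook_entries h = insert (hx h) (hleg h \<union> set_mset (harm h))"

text \<open>Cells are (row, column), 1-indexed, French notation (row 1 at the bottom).\<close>
type_synonym tab = "nat \<times> nat \<Rightarrow> hook option"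

definition partition :: "nat list \<Rightarrow> bool" where
  "partition lam \<longleftrightarrow> sorted_wrt (\<ge>) lam \<and> (\<forall>x\<in>set lam. 0 < x)"

definition young_cells :: "nat list \<Rightarrow> (nat \<times> nat) set" where
  "young_cells lam = {(r, c). 1 \<le> r \<and> r \<le> length lam \<and> 1 \<le> c \<and> c \<le> lam ! (r - 1)}"

definition is_HVT :: "nat list \<Rightarrow> tab \<Rightarrow> bool" where
  "is_HVT lam T \<longleftrightarrow> dom T = young_cells lam
     \<and> (\<forall>p h. T p = Some h \<longrightarrow> valid_hook h)
     \<and> (\<forall>r c c' A B. T (r, c) = Some A \<longrightarrow> T (r, c') = Some B \<longrightarrow> c < c'
           \<longrightarrow> Max (hook_entries A) \<le> Min (hook_entries B))
     \<and> (\<forall>r r' c A C. T (r, c) = Some A \<longrightarrow> T (r', c) = Some C \<longrightarrow> r < r'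
           \<longrightarrow> Max (hook_entries A) < Min (hook_entries C))"

definition arm_excess :: "tab \<Rightarrow> nat" where
  "arm_excess T = (\<Sum>p\<in>dom T. size (harm (the (T p))))"

definition cells_with_arm :: "tab \<Rightarrow> (nat \<times> nat) set" where
  "cells_with_arm T = {p \<in> dom T. harm (the (T p)) \<noteq> {#}}"

definition maxarm :: "hook \<Rightarrow> nat" where
  "maxarm h = Max (set_mset (harm h))"

definition bump_col :: "tab \<Rightarrow> nat" where
  "bump_col T = Max (snd ` cells_with_arm T)"

definition bump_row :: "tab \<Rightarrow> nat" where
  "bump_row T = (let c = bump_col T; S = {r. (r, c) \<in> cells_with_arm T};
                     M = Max ((\<lambda>r. maxarm (the (T (r, c)))) ` S)
                 in Max {r \<in> S. maxarm (the (T (r, c))) = M})"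

definition col_entries :: "tab \<Rightarrow> nat \<Rightarrow> nat set" where
  "col_entries T j = (\<Union>{hook_entries h | h r. T (r, j) = Some h})"

definition col_height :: "tab \<Rightarrow> nat \<Rightarrow> nat" where
  "col_height T j = card {r. (r, j) \<in> dom T}"

text \<open>Put a in the position of k in g, then append k to the arm (case (a)).
  If k occurs in several positions of g, the hook position is preferred, then the leg.\<close>
definition replace_and_append :: "hook \<Rightarrow> nat \<Rightarrow> nat \<Rightarrow> hook" where
  "replace_and_append g k a =
     (if hx g = k then g\<lparr>hx := a, harm := harm g + {#k#}\<rparr>
      else if k \<in> hleg g then g\<lparr>hleg := insert a (hleg g - {k}), harm := harm g + {#k#}\<rparr>
      else g\<lparr>harm := harm g - {#k#} + {#a#} + {#k#}\<rparr>)"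

definition bump :: "tab \<Rightarrow> tab" where
  "bump T =
    (if arm_excess T = 0 then T else
     (let c = bump_col T; r = bump_row T; h = the (T (r, c)); a = maxarm h;
          moved = {x \<in> hleg h. a < x \<and> x \<le> Max (hleg h)};
          h' = h\<lparr>harm := harm h - {#a#}\<rparr>;
          E = {x \<in> col_entries T (c + 1). a \<le> x};
          kopt = (if E = {} then None else Some (Min E));
          rt = (case kopt of None \<Rightarrow> col_height T (c + 1) + 1
                 | Some k \<Rightarrow> (THE r'. \<exists>g. T (r', c + 1) = Some g \<and> k \<in> hook_entries g));
          newcell = \<lparr>hx = a, hleg = {}, harm = {#}\<rparr>;
          g = (case T (rt, c + 1) of None \<Rightarrow> newcell | Some g \<Rightarrow> g);
          karm = (case kopt of None \<Rightarrow> {#} | Some k \<Rightarrow> {#k#})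
      in if rt \<noteq> r then
           T((r, c) \<mapsto> h',
             (rt, c + 1) \<mapsto> (case kopt of None \<Rightarrow> newcell | Some k \<Rightarrow> replace_and_append g k a))
         else
           T((r, c) \<mapsto> h'\<lparr>hleg := hleg h - moved\<rparr>,
             (rt, c + 1) \<mapsto> g\<lparr>hx := a, hleg := hleg g \<union> moved, harm := harm g + karm\<rparr>)))"

definition unc_ins :: "tab \<Rightarrow> tab" where
  "unc_ins T = (bump ^^ (LEAST d. 1 \<le> d \<and>
       (dom ((bump ^^ d) T) \<noteq> dom ((bump ^^ (d - 1)) T) \<or> (bump ^^ d) T = (bump ^^ (d - 1)) T))) T"

type_synonym qtab = "nat \<times> nat \<Rightarrow> int option"

definition unc_step :: "tab \<times> qtab \<Rightarrow> tab \<times> qtab" where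
  "unc_step PQ = (let P = fst PQ; Q = snd PQ; P' = unc_ins P; c = bump_col P;
                      cell = (THE x. x \<in> dom P' - dom P)
                  in (P', Q(cell \<mapsto> int (snd cell) - int c)))"

definition uncrowd :: "tab \<Rightarrow> tab \<times> qtab" where
  "uncrowd T = (unc_step ^^ arm_excess T) (T, Map.empty)"

definition P_of :: "tab \<Rightarrow> tab" where "P_of T = fst (uncrowd T)"
definition Q_of :: "tab \<Rightarrow> qtab" where "Q_of T = snd (uncrowd T)"

definition col_flagged_increasing :: "nat list \<Rightarrow> nat list \<Rightarrow> qtab \<Rightarrow> bool" where
  "col_flagged_increasing lam mu Q \<longleftrightarrow>
     partition lam \<and> partition mu \<and> young_cells lam \<subseteq> young_cells mu
     \<and> length lam = length mu
     \<and> dom Q = young_cells mu - young_cells lam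
     \<and> (\<forall>p v. Q p = Some v \<longrightarrow> 0 < v \<and> v \<le> int (snd p) - 1)
     \<and> (\<forall>r c c' v w. Q (r, c) = Some v \<longrightarrow> Q (r, c') = Some w \<longrightarrow> c < c' \<longrightarrow> v < w)
     \<and> (\<forall>r r' c v w. Q (r, c) = Some v \<longrightarrow> Q (r', c) = Some w \<longrightarrow> r < r' \<longrightarrow> v < w)"

end

theory Submission
  imports Defs
begin


definition shape_ok :: "(nat \<times> nat) set \<Rightarrow> bool" where
  "shape_ok D \<longleftrightarrow> finite D \<and> (\<forall>r c. (r,c) \<in> D \<longrightarrow> 1 \<le> r \<and> 1 \<le> c)
     \<and> (\<forall>r c r' c'. (r,c) \<in> D \<longrightarrow> 1 \<le> r' \<longrightarrow> r' \<le> r \<longrightarrow> 1 \<le> c' \<longrightarrow> c' \<le> c \<longrightarrow> (r',c') \<in> D)"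

definition hooks_ok :: "tab \<Rightarrow> bool" where
  "hooks_ok T \<longleftrightarrow> (\<forall>p h. T p = Some h \<longrightarrow> valid_hook h)"

definition rows_ok :: "tab \<Rightarrow> bool" where
  "rows_ok T \<longleftrightarrow> (\<forall>r c c' A B. T (r,c) = Some A \<longrightarrow> T (r,c') = Some B \<longrightarrow> c < c'
      \<longrightarrow> (\<forall>x\<in>hook_entries A. \<forall>y\<in>hook_entries B. x \<le> y))"

definition cols_ok :: "tab \<Rightarrow> bool" where
  "cols_ok T \<longleftrightarrow> (\<forall>r r' c A C. T (r,c) = Some A \<longrightarrow> T (r',c) = Some C \<longrightarrow> r < r'
      \<longrightarrow> (\<forall>x\<in>hook_entries A. \<forall>y\<in>hook_entries C. x < y))"

definition Inv :: "tab \<Rightarrow> bool" where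
  "Inv T \<longleftrightarrow> shape_ok (dom T) \<and> hooks_ok T \<and> rows_ok T \<and> cols_ok T"

definition tag :: "nat \<Rightarrow> nat multiset \<Rightarrow> (nat \<times> nat) multiset" where
  "tag c M = image_mset (\<lambda>x. (c, x)) M"

definition arms :: "tab \<Rightarrow> (nat \<times> nat) multiset" where
  "arms T = (\<Sum>p\<in>dom T. tag (snd p) (harm (the (T p))))"

definition col_hl :: "tab \<Rightarrow> nat \<Rightarrow> nat set" where
  "col_hl T j = {x. \<exists>r h. T (r, j) = Some h \<and> (x = hx h \<or> x \<in> hleg h)}"

lemma hook_entries_finite: "valid_hook h \<Longrightarrow> finite (hook_entries h)"
  by (simp add: valid_hook_def hook_entries_def)

lemma hx_in_entries [simp]: "hx h \<in> hook_entries h"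
  by (simp add: hook_entries_def)

lemma hx_le_entries: "valid_hook h \<Longrightarrow> x \<in> hook_entries h \<Longrightarrow> hx h \<le> x"
  by (auto simp: valid_hook_def hook_entries_def less_imp_le)

lemma col_entries_iff: "x \<in> col_entries T c \<longleftrightarrow> (\<exists>r h. T (r,c) = Some h \<and> x \<in> hook_entries h)"
  unfolding col_entries_def by blast

lemma col_hl_sub: "x \<in> col_hl T c \<Longrightarrow> x \<in> col_entries T c"
  unfolding col_hl_def col_entries_iff hook_entries_def by blast

lemma finite_rows: "finite (dom T) \<Longrightarrow> finite {r. (r,c) \<in> dom T}"
proof -
  assume f: "finite (dom T)"
  have "{r. (r,c) \<in> dom T} = fst ` (dom T \<inter> {p. snd p = c})" by force
  thus ?thesis using f by simp
qed

lemma col_entries_finite: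
  assumes "finite (dom T)" "hooks_ok T"
  shows "finite (col_entries T c)"
proof -
  have "col_entries T c = (\<Union>r\<in>{r. (r,c) \<in> dom T}. hook_entries (the (T (r,c))))"
    unfolding col_entries_def by force
  moreover have "\<forall>r\<in>{r. (r,c) \<in> dom T}. finite (hook_entries (the (T (r,c))))"
    using assms(2) hook_entries_finite unfolding hooks_ok_def by auto
  ultimately show ?thesis using finite_rows[OF assms(1)] by simp
qed

lemma arms_mem:
  assumes "finite (dom T)"
  shows "(c,x) \<in># arms T \<longleftrightarrow> (\<exists>r h. T (r,c) = Some h \<and> x \<in># harm h)"
  unfolding arms_def set_mset_sum[OF assms] tag_def by force

lemma arm_excess_size: "finite (dom T) \<Longrightarrow> arm_excess T = size (arms T)"
  unfolding arm_excess_def arms_def tag_def by simp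

lemma arms_upd:
  assumes "finite (dom T)"
  shows "arms (T(p \<mapsto> h)) + (case T p of None \<Rightarrow> {#} | Some g \<Rightarrow> tag (snd p) (harm g))
       = arms T + tag (snd p) (harm h)"
proof (cases "T p")
  case None
  hence "dom (T(p \<mapsto> h)) = insert p (dom T)" "p \<notin> dom T" by auto
  hence "arms (T(p \<mapsto> h)) = tag (snd p) (harm h) + (\<Sum>q\<in>dom T. tag (snd q) (harm (the ((T(p \<mapsto> h)) q))))"
    unfolding arms_def using assms by (simp add: sum.insert)
  also have "(\<Sum>q\<in>dom T. tag (snd q) (harm (the ((T(p \<mapsto> h)) q)))) = arms T"
    unfolding arms_def using \<open>p \<notin> dom T\<close> by (intro sum.cong) auto
  finally show ?thesis using None by (simp only: option.simps(4) add.commute add_0_right add_0)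
next
  case (Some g)
  hence pd: "p \<in> dom T" by auto
  hence d: "dom (T(p \<mapsto> h)) = dom T" by auto
  have "arms (T(p \<mapsto> h)) = tag (snd p) (harm h) + (\<Sum>q\<in>dom T - {p}. tag (snd q) (harm (the ((T(p \<mapsto> h)) q))))"
    unfolding arms_def d using assms pd by (simp add: sum.remove)
  also have "(\<Sum>q\<in>dom T - {p}. tag (snd q) (harm (the ((T(p \<mapsto> h)) q)))) = (\<Sum>q\<in>dom T - {p}. tag (snd q) (harm (the (T q))))"
    by (intro sum.cong) auto
  finally have 1: "arms (T(p \<mapsto> h)) = tag (snd p) (harm h) + (\<Sum>q\<in>dom T - {p}. tag (snd q) (harm (the (T q))))" .
  have 2: "arms T = tag (snd p) (harm g) + (\<Sum>q\<in>dom T - {p}. tag (snd q) (harm (the (T q))))"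
    unfolding arms_def using assms pd Some by (simp add: sum.remove)
  show ?thesis using 1 2 Some by (simp add: ac_simps)
qed

lemma rows_set:
  assumes "shape_ok D"
  shows "{r. (r,c) \<in> D} = {1..card {r. (r,c) \<in> D}}"
proof (cases "{r. (r,c) \<in> D} = {}")
  case True thus ?thesis by simp
next
  case False
  let ?S = "{r. (r,c) \<in> D}"
  have fin: "finite ?S"
  proof -
    have "?S = fst ` (D \<inter> {p. snd p = c})" by force
    thus ?thesis using assms unfolding shape_ok_def by simp
  qed
  have "?S = {1..Max ?S}"
  proof
    show "?S \<subseteq> {1..Max ?S}"
    proof
      fix x assume "x \<in> ?S"
      hence "(x,c) \<in> D" "x \<le> Max ?S" using fin by auto
      hence "1 \<le> x" using assms unfolding shape_ok_def by blast
      thus "x \<in> {1..Max ?S}" using \<open>x \<le> Max ?S\<close> by simp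
    qed
    show "{1..Max ?S} \<subseteq> ?S"
    proof
      fix x assume x: "x \<in> {1..Max ?S}"
      have "Max ?S \<in> ?S" using fin False by (intro Max_in) auto
      hence "(Max ?S, c) \<in> D" by simp
      moreover have "1 \<le> c" using \<open>(Max ?S, c) \<in> D\<close> assms unfolding shape_ok_def by blast
      moreover have "1 \<le> x" "x \<le> Max ?S" using x by auto
      ultimately have "(x,c) \<in> D" using assms unfolding shape_ok_def by blast
      thus "x \<in> ?S" by simp
    qed
  qed
  thus ?thesis by (metis card_atLeastAtMost diff_Suc_1)
qed



lemma InvD:
  assumes "Inv T"
  shows "finite (dom T)"
    and "\<And>r c. (r,c) \<in> dom T \<Longrightarrow> 1 \<le> r \<and> 1 \<le> c"
    and "\<And>r c r' c'. (r,c) \<in> dom T \<Longrightarrow> 1 \<le> r' \<Longrightarrow> r' \<le> r \<Longrightarrow> 1 \<le> c' \<Longrightarrow> c' \<le> c \<Longrightarrow> (r',c') \<in> dom T"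
    and "\<And>p h. T p = Some h \<Longrightarrow> valid_hook h"
    and "\<And>r c c' A B x y. T (r,c) = Some A \<Longrightarrow> T (r,c') = Some B \<Longrightarrow> c < c' \<Longrightarrow> x \<in> hook_entries A \<Longrightarrow> y \<in> hook_entries B \<Longrightarrow> x \<le> y"
    and "\<And>r r' c A C x y. T (r,c) = Some A \<Longrightarrow> T (r',c) = Some C \<Longrightarrow> r < r' \<Longrightarrow> x \<in> hook_entries A \<Longrightarrow> y \<in> hook_entries C \<Longrightarrow> x < y"
proof -
  have s: "shape_ok (dom T)" "hooks_ok T" "rows_ok T" "cols_ok T" using assms by (simp_all add: Inv_def)
  show "finite (dom T)" using s(1) by (simp add: shape_ok_def)
  show "\<And>r c. (r,c) \<in> dom T \<Longrightarrow> 1 \<le> r \<and> 1 \<le> c" using s(1) unfolding shape_ok_def by blast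
  show "\<And>r c r' c'. (r,c) \<in> dom T \<Longrightarrow> 1 \<le> r' \<Longrightarrow> r' \<le> r \<Longrightarrow> 1 \<le> c' \<Longrightarrow> c' \<le> c \<Longrightarrow> (r',c') \<in> dom T"
    using s(1) unfolding shape_ok_def by blast
  show "\<And>p h. T p = Some h \<Longrightarrow> valid_hook h" using s(2) unfolding hooks_ok_def by blast
  show "\<And>r c c' A B x y. T (r,c) = Some A \<Longrightarrow> T (r,c') = Some B \<Longrightarrow> c < c' \<Longrightarrow> x \<in> hook_entries A \<Longrightarrow> y \<in> hook_entries B \<Longrightarrow> x \<le> y"
    using s(3) unfolding rows_ok_def by blast
  show "\<And>r r' c A C x y. T (r,c) = Some A \<Longrightarrow> T (r',c) = Some C \<Longrightarrow> r < r' \<Longrightarrow> x \<in> hook_entries A \<Longrightarrow> y \<in> hook_entries C \<Longrightarrow> x < y"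
    using s(4) unfolding cols_ok_def by blast
qed

lemma upd_Inv:
  assumes Inv: "Inv T" and Tp1: "T (r,j) = Some h" and ha: "hx h \<le> a" and rtr: "rt \<le> r" and rt1: "1 \<le> rt"
  and v1: "valid_hook h1" and v2: "valid_hook h2"
  and sub1: "hook_entries h1 \<subseteq> hook_entries h"
  and eqr: "rt = r \<Longrightarrow> \<forall>x\<in>hook_entries h1. x \<le> a"
  and L1: "\<forall>x\<in>hook_entries h2. a \<le> x \<or> (\<exists>g. T (rt,j+1) = Some g \<and> x \<in> hook_entries g)"
  and L2: "\<forall>g. T (rt,j+1) = Some g \<longrightarrow> (\<forall>x\<in>hook_entries h2. \<exists>y\<in>hook_entries g. x \<le> y)"
  and L3: "T (rt,j+1) = None \<Longrightarrow> (\<forall>r' c'. 1 \<le> r' \<longrightarrow> r' \<le> rt \<longrightarrow> 1 \<le> c' \<longrightarrow> c' \<le> j+1 \<longrightarrow> (r',c') \<noteq> (rt,j+1) \<longrightarrow> (r',c') \<in> dom T)"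
  and L4: "T (rt,j+1) = None \<Longrightarrow> (\<forall>r' c'. (r',c') \<in> dom T \<longrightarrow> \<not>(r' = rt \<and> j+1 < c') \<and> \<not>(c' = j+1 \<and> rt < r'))"
  and L5: "\<forall>r' g. r' < rt \<longrightarrow> T (r',j+1) = Some g \<longrightarrow> (\<forall>y\<in>hook_entries g. y < a)"
  shows "Inv (T((r,j) \<mapsto> h1, (rt,j+1) \<mapsto> h2))"
proof -
  let ?T = "T((r,j) \<mapsto> h1, (rt,j+1) \<mapsto> h2)"
  note fin = InvD(1)[OF Inv] and pos = InvD(2)[OF Inv] and dc = InvD(3)[OF Inv]
   and hv = InvD(4)[OF Inv] and rowT = InvD(5)[OF Inv] and colT = InvD(6)[OF Inv]
  have p1d: "(r,j) \<in> dom T" using Tp1 by auto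
  have r1: "1 \<le> r" and j1: "1 \<le> j" using pos[OF p1d] by auto
  have dT: "dom ?T = insert (rt,j+1) (dom T)" using p1d by auto
  have Tq: "\<And>q. ?T q = (if q = (rt,j+1) then Some h2 else if q = (r,j) then Some h1 else T q)"
    by auto
  have sh1: "finite (dom ?T)" using fin dT by simp
  have sh2: "\<forall>x y. (x,y) \<in> dom ?T \<longrightarrow> 1 \<le> x \<and> 1 \<le> y" using pos rt1 dT by auto
  have sh3: "\<forall>x y x' y'. (x,y) \<in> dom ?T \<longrightarrow> 1 \<le> x' \<longrightarrow> x' \<le> x \<longrightarrow> 1 \<le> y' \<longrightarrow> y' \<le> y \<longrightarrow> (x',y') \<in> dom ?T"
    unfolding dT
  proof (intro allI impI)
    fix x y x' y' assume xy: "(x,y) \<in> insert (rt, j + 1) (dom T)" and h: "1 \<le> x'" "x' \<le> x" "1 \<le> y'" "y' \<le> y"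
    show "(x', y') \<in> insert (rt, j + 1) (dom T)"
    proof (cases "(x,y) \<in> dom T")
      case True thus ?thesis using dc h by blast
    next
      case False
      hence xy2: "(x,y) = (rt,j+1)" using xy by auto
      show ?thesis
      proof (cases "T (rt,j+1)")
        case None
        thus ?thesis using L3[OF None] h xy2 by auto
      next
        case (Some g)
        hence "(rt,j+1) \<in> dom T" by auto
        thus ?thesis using dc h xy2 by blast
      qed
    qed
  qed
  have shp: "shape_ok (dom ?T)" unfolding shape_ok_def using sh1 sh2 sh3 by blast
  have hk: "hooks_ok ?T" unfolding hooks_ok_def using hv v1 v2 by (auto simp: Tq)
  have hxe: "hx h \<in> hook_entries h" by simp
  have rk: "rows_ok ?T" unfolding rows_ok_def
  proof (intro allI impI ballI)
    fix x c c' A B u w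
    assume A: "?T (x,c) = Some A" and B: "?T (x,c') = Some B" and cc: "c < c'"
      and u: "u \<in> hook_entries A" and w: "w \<in> hook_entries B"
    show "u \<le> w"
    proof (cases "(x,c') = (rt,j+1)")
      case True
      hence x: "x = rt" and c': "c' = j+1" by auto
      hence Bh: "B = h2" using B by (simp add: Tq)
      show ?thesis
      proof (cases "(x,c) = (r,j)")
        case True
        hence "A = h1" "rt = r" "c = j" using A x by (auto simp: Tq)
        have uh: "u \<in> hook_entries h" using sub1 u \<open>A = h1\<close> by auto
        from L1 w Bh show ?thesis
        proof (elim ballE disjE exE conjE)
          assume "a \<le> w" thus ?thesis using eqr[OF \<open>rt = r\<close>] u \<open>A = h1\<close> by auto
        next
          fix g assume "T (rt, j+1) = Some g" "w \<in> hook_entries g"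
          thus ?thesis using rowT[OF Tp1 _ _ uh] \<open>rt = r\<close> by auto
        qed auto
      next
        case False
        hence TA: "T (x,c) = Some A" using A True cc by (auto simp: Tq split: if_splits)
        from L1 w Bh show ?thesis
        proof (elim ballE disjE exE conjE)
          assume aw: "a \<le> w"
          show ?thesis
          proof (cases "rt < r")
            case True
            have "(rt,j) \<in> dom T" using dc[OF p1d rt1 rtr j1 order_refl] .
            then obtain Z where Z: "T (rt,j) = Some Z" by auto
            have "u < hx h"
            proof (cases "c = j")
              case True
              hence "A = Z" using Z TA x by simp
              thus ?thesis using colT[OF Z Tp1 \<open>rt < r\<close> _ hxe] u by simp
            next
              case False hence "c < j" using cc c' by simp
              hence "u \<le> hx Z" using rowT[OF TA[unfolded x] Z _ u] by simp
              also have "hx Z < hx h" using colT[OF Z Tp1 True] by simp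
              finally show ?thesis .
            qed
            thus ?thesis using ha aw by simp
          next
            case False
            hence "rt = r" using rtr by simp
            hence "c < j" using False cc c' \<open>(x,c) \<noteq> (r,j)\<close> x by auto
            thus ?thesis using rowT[OF TA[unfolded x \<open>rt = r\<close>] Tp1 _ u hxe] ha aw by simp
          qed
        next
          fix g assume "T (rt, j+1) = Some g" "w \<in> hook_entries g"
          thus ?thesis using rowT[OF TA _ cc u] x c' by auto
        qed auto
      qed
    next
      case False
      note c'F = False
      show ?thesis
      proof (cases "(x,c) = (rt,j+1)")
        case True
        hence x: "x = rt" and c: "c = j+1" by auto
        hence Ah: "A = h2" using A by (simp add: Tq)
        have TB: "T (x,c') = Some B" using B c'F cc c by (auto simp: Tq split: if_splits)
        show ?thesis
        proof (cases "T (rt,j+1)")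
          case None
          hence "(x,c') \<notin> dom T" using L4 x c cc by blast
          thus ?thesis using TB by auto
        next
          case (Some g)
          then obtain y where y: "y \<in> hook_entries g" "u \<le> y" using L2 u Ah by blast
          have "y \<le> w" using rowT[OF Some TB[unfolded x] _ y(1) w] c cc by simp
          thus ?thesis using y by simp
        qed
      next
        case False
        note cF = False
        show ?thesis
        proof (cases "(x,c) = (r,j)")
          case True
          hence TB: "T (x,c') = Some B" using B c'F cc by (auto simp: Tq split: if_splits)
          have "A = h1" using A True cF by (auto simp: Tq)
          moreover have "x = r" "c = j" using True by auto
          ultimately show ?thesis using rowT[OF Tp1 TB[unfolded \<open>x = r\<close>] _ _ w] cc sub1 u by auto
        next
          case False
          hence TA: "T (x,c) = Some A" using A cF by (auto simp: Tq)
          show ?thesis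
          proof (cases "(x,c') = (r,j)")
            case True
            hence "B = h1" using B c'F by (auto simp: Tq)
            moreover have "x = r" "c' = j" using True by auto
            ultimately show ?thesis using rowT[OF TA[unfolded \<open>x = r\<close>] Tp1 _ u] cc sub1 w by auto
          next
            case False
            hence TB: "T (x,c') = Some B" using B c'F by (auto simp: Tq)
            show ?thesis using rowT[OF TA TB cc u w] .
          qed
        qed
      qed
    qed
  qed
  have ck: "cols_ok ?T" unfolding cols_ok_def
  proof (intro allI impI ballI)
    fix x x' c A C u w
    assume A: "?T (x,c) = Some A" and C: "?T (x',c) = Some C" and xx: "x < x'"
      and u: "u \<in> hook_entries A" and w: "w \<in> hook_entries C"
    show "u < w"
    proof (cases "(x',c) = (rt,j+1)")
      case True
      hence x': "x' = rt" and c: "c = j+1" by auto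
      hence Ch: "C = h2" using C by (simp add: Tq)
      have TA: "T (x,c) = Some A" using A xx x' c by (auto simp: Tq split: if_splits)
      from L1 w Ch show ?thesis
      proof (elim ballE disjE exE conjE)
        assume "a \<le> w" thus ?thesis using L5 TA c xx x' u by fastforce
      next
        fix g assume "T (rt, j+1) = Some g" "w \<in> hook_entries g"
        thus ?thesis using colT[OF TA _ xx u] x' c by auto
      qed auto
    next
      case False
      note x'F = False
      show ?thesis
      proof (cases "(x,c) = (rt,j+1)")
        case True
        hence x: "x = rt" and c: "c = j+1" by auto
        hence Ah: "A = h2" using A by (simp add: Tq)
        have TC: "T (x',c) = Some C" using C x'F c by (auto simp: Tq split: if_splits)
        show ?thesis
        proof (cases "T (rt,j+1)")
          case None
          hence "(x',c) \<notin> dom T" using L4 x c xx by blast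
          thus ?thesis using TC by auto
        next
          case (Some g)
          then obtain y where y: "y \<in> hook_entries g" "u \<le> y" using L2 u Ah by blast
          have "y < w" using colT[OF Some TC[unfolded c] _ y(1) w] x xx by simp
          thus ?thesis using y by simp
        qed
      next
        case False
        note cF = False
        show ?thesis
        proof (cases "(x,c) = (r,j)")
          case True
          hence TC: "T (x',c) = Some C" using C x'F xx by (auto simp: Tq split: if_splits)
          have "A = h1" using A True cF by (auto simp: Tq)
          moreover have "x = r" "c = j" using True by auto
          ultimately show ?thesis using colT[OF Tp1 TC[unfolded \<open>c = j\<close>] _ _ w] xx sub1 u by auto
        next
          case False
          hence TA: "T (x,c) = Some A" using A cF by (auto simp: Tq)
          show ?thesis
          proof (cases "(x',c) = (r,j)")
            case True
            hence "C = h1" using C x'F by (auto simp: Tq)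
            moreover have "x' = r" "c = j" using True by auto
            ultimately show ?thesis using colT[OF TA[unfolded \<open>c = j\<close>] Tp1 _ u] xx sub1 w by auto
          next
            case False
            hence TC: "T (x',c) = Some C" using C x'F by (auto simp: Tq)
            show ?thesis using colT[OF TA TC xx u w] .
          qed
        qed
      qed
    qed
  qed
  show ?thesis unfolding Inv_def using shp hk rk ck by blast
qed



lemma cwa_iff:
  assumes "finite (dom T)"
  shows "p \<in> cells_with_arm T \<longleftrightarrow> (\<exists>h y. T p = Some h \<and> y \<in># harm h)"
  unfolding cells_with_arm_def by (cases "T p") (auto simp: multiset_nonemptyE)

lemma bump_col_eq:
  assumes Inv: "Inv T" and ja: "(j,a) \<in># arms T" and allj: "\<forall>(x,y)\<in>#arms T. x \<le> j \<and> (x = j \<longrightarrow> y \<le> a)"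
  shows "bump_col T = j"
proof -
  note fin = InvD(1)[OF Inv]
  have fc: "finite (cells_with_arm T)" using fin unfolding cells_with_arm_def by simp
  obtain r h where rh: "T (r,j) = Some h" "a \<in># harm h" using ja arms_mem[OF fin] by blast
  have "(r,j) \<in> cells_with_arm T" using rh cwa_iff[OF fin] by blast
  hence jin: "j \<in> snd ` cells_with_arm T" by force
  have le: "\<forall>x\<in>snd ` cells_with_arm T. x \<le> j"
  proof
    fix x assume "x \<in> snd ` cells_with_arm T"
    then obtain r' where "(r',x) \<in> cells_with_arm T" by force
    then obtain h' y where "T (r',x) = Some h'" "y \<in># harm h'" using cwa_iff[OF fin] by blast
    hence "(x,y) \<in># arms T" using arms_mem[OF fin] by blast
    thus "x \<le> j" using allj by auto
  qed
  show ?thesis unfolding bump_col_def using fc jin le by (intro Max_eqI) auto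
qed

lemma bump_row_props:
  assumes Inv: "Inv T" and ja: "(j,a) \<in># arms T" and allj: "\<forall>(x,y)\<in>#arms T. x \<le> j \<and> (x = j \<longrightarrow> y \<le> a)"
  shows "\<exists>h. T (bump_row T, j) = Some h \<and> a \<in># harm h \<and> maxarm h = a"
proof -
  note fin = InvD(1)[OF Inv]
  have bc: "bump_col T = j" using bump_col_eq[OF assms] .
  define S where "S = {r. (r, j) \<in> cells_with_arm T}"
  have finS: "finite S" unfolding S_def cells_with_arm_def using finite_rows[OF fin, of j] by (auto intro: finite_subset)
  obtain r0 h0 where rh0: "T (r0,j) = Some h0" "a \<in># harm h0" using ja arms_mem[OF fin] by blast
  have ma_le: "\<And>r h. T (r,j) = Some h \<Longrightarrow> harm h \<noteq> {#} \<Longrightarrow> maxarm h \<le> a"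
  proof -
    fix r h assume "T (r,j) = Some h" "harm h \<noteq> {#}"
    hence "\<forall>y\<in>set_mset (harm h). y \<le> a" using allj arms_mem[OF fin] by fastforce
    thus "maxarm h \<le> a" unfolding maxarm_def using \<open>harm h \<noteq> {#}\<close> by simp
  qed
  have ma0: "maxarm h0 = a"
  proof -
    have "\<forall>y\<in>set_mset (harm h0). y \<le> a" using allj arms_mem[OF fin] rh0(1) by fastforce
    thus ?thesis unfolding maxarm_def using rh0(2) by (intro Max_eqI) auto
  qed
  have r0S: "r0 \<in> S" unfolding S_def using rh0 cwa_iff[OF fin] by blast
  have M: "Max ((\<lambda>r. maxarm (the (T (r, j)))) ` S) = a"
  proof (rule Max_eqI)
    show "finite ((\<lambda>r. maxarm (the (T (r, j)))) ` S)" using finS by simp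
    show "a \<in> (\<lambda>r. maxarm (the (T (r, j)))) ` S" using r0S rh0 ma0 by force
    fix y assume "y \<in> (\<lambda>r. maxarm (the (T (r, j)))) ` S"
    then obtain r where "r \<in> S" "y = maxarm (the (T (r, j)))" by auto
    then obtain h z where "T (r,j) = Some h" "z \<in># harm h" "y = maxarm h"
      unfolding S_def using cwa_iff[OF fin] by force
    thus "y \<le> a" using ma_le by fastforce
  qed
  have br: "bump_row T = Max {r \<in> S. maxarm (the (T (r, j))) = a}"
    unfolding bump_row_def Let_def bc S_def[symmetric] M ..
  have "bump_row T \<in> {r \<in> S. maxarm (the (T (r, j))) = a}"
    unfolding br using finS r0S rh0 ma0 by (intro Max_in) auto
  then obtain h z where h: "T (bump_row T, j) = Some h" "z \<in># harm h" "maxarm h = a"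
    unfolding S_def using cwa_iff[OF fin] by force
  have "a \<in># harm h" using h unfolding maxarm_def by (metis Max_in empty_iff finite_set_mset set_mset_eq_empty_iff)
  thus ?thesis using h by blast
qed



lemma bump_unfold:
  assumes Inv: "Inv T" and ja: "(j,a) \<in># arms T" and allj: "\<forall>(x,y)\<in>#arms T. x \<le> j \<and> (x = j \<longrightarrow> y \<le> a)"
    and r: "r = bump_row T" and h: "T (r,j) = Some h" and mh: "maxarm h = a"
  defines "E \<equiv> {x \<in> col_entries T (j+1). a \<le> x}"
  defines "moved \<equiv> {x \<in> hleg h. a < x \<and> x \<le> Max (hleg h)}"
  defines "kopt \<equiv> (if E = {} then None else Some (Min E))"
  defines "rt \<equiv> (case kopt of None \<Rightarrow> col_height T (j + 1) + 1
                 | Some k \<Rightarrow> (THE r'. \<exists>g. T (r', j + 1) = Some g \<and> k \<in> hook_entries g))"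
  defines "newcell \<equiv> \<lparr>hx = a, hleg = {}, harm = {#}\<rparr>"
  defines "g \<equiv> (case T (rt, j + 1) of None \<Rightarrow> newcell | Some g \<Rightarrow> g)"
  defines "karm \<equiv> (case kopt of None \<Rightarrow> {#} | Some k \<Rightarrow> {#k#})"
  shows "bump T = (if rt \<noteq> r then
           T((r, j) \<mapsto> h\<lparr>harm := harm h - {#a#}\<rparr>,
             (rt, j + 1) \<mapsto> (case kopt of None \<Rightarrow> newcell | Some k \<Rightarrow> replace_and_append g k a))
         else
           T((r, j) \<mapsto> h\<lparr>harm := harm h - {#a#}, hleg := hleg h - moved\<rparr>,
             (rt, j + 1) \<mapsto> g\<lparr>hx := a, hleg := hleg g \<union> moved, harm := harm g + karm\<rparr>))"
proof -
  note fin = InvD(1)[OF Inv]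
  have ae: "arm_excess T \<noteq> 0" using ja arm_excess_size[OF fin] by (auto simp: size_eq_0_iff_empty)
  have bc: "bump_col T = j" using bump_col_eq[OF Inv ja allj] .
  show ?thesis
    unfolding bump_def Let_def bc r[symmetric] h option.sel mh
    using ae unfolding E_def[symmetric] moved_def[symmetric] kopt_def[symmetric] rt_def[symmetric]
      newcell_def[symmetric] g_def[symmetric] karm_def[symmetric]
    by simp
qed

lemma tag_add: "tag c (M + N) = tag c M + tag c N"
  by (simp add: tag_def)

lemma tag_single: "tag c {#x#} = {#(c,x)#}"
  by (simp add: tag_def)

lemma tag_empty: "tag c {#} = {#}"
  by (simp add: tag_def)

lemma assemble:
  assumes Inv: "Inv T" and Tp1: "T (r,j) = Some h" and ah: "a \<in># harm h" and ha: "hx h \<le> a"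
  and rtr: "rt \<le> r" and rt1: "1 \<le> rt"
  and v1: "valid_hook h1" and v2: "valid_hook h2"
  and sub1: "hook_entries h1 \<subseteq> hook_entries h"
  and eqr: "rt = r \<Longrightarrow> \<forall>x\<in>hook_entries h1. x \<le> a"
  and L1: "\<forall>x\<in>hook_entries h2. a \<le> x \<or> (\<exists>g. T (rt,j+1) = Some g \<and> x \<in> hook_entries g)"
  and L2: "\<forall>g. T (rt,j+1) = Some g \<longrightarrow> (\<forall>x\<in>hook_entries h2. \<exists>y\<in>hook_entries g. x \<le> y)"
  and L3: "T (rt,j+1) = None \<Longrightarrow> (\<forall>r' c'. 1 \<le> r' \<longrightarrow> r' \<le> rt \<longrightarrow> 1 \<le> c' \<longrightarrow> c' \<le> j+1 \<longrightarrow> (r',c') \<noteq> (rt,j+1) \<longrightarrow> (r',c') \<in> dom T)"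
  and L4: "T (rt,j+1) = None \<Longrightarrow> (\<forall>r' c'. (r',c') \<in> dom T \<longrightarrow> \<not>(r' = rt \<and> j+1 < c') \<and> \<not>(c' = j+1 \<and> rt < r'))"
  and L5: "\<forall>r' g. r' < rt \<longrightarrow> T (r',j+1) = Some g \<longrightarrow> (\<forall>y\<in>hook_entries g. y < a)"
  and hm1: "harm h1 = harm h - {#a#}" and hx1: "hx h1 = hx h" and hl1: "{x\<in>hleg h. x \<le> a} \<subseteq> hleg h1"
  and noarm: "\<forall>g. T (rt,j+1) = Some g \<longrightarrow> harm g = {#}"
  and a2: "a = hx h2 \<or> a \<in> hleg h2"
  and T': "T' = T((r,j) \<mapsto> h1, (rt,j+1) \<mapsto> h2)"
  shows "Inv T' \<and> arms T' + {#(j,a)#} = arms T + tag (j+1) (harm h2)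
     \<and> dom T' = insert (rt,j+1) (dom T)
     \<and> (\<forall>p. snd p \<noteq> j \<longrightarrow> snd p \<noteq> j+1 \<longrightarrow> T' p = T p)
     \<and> a \<in> col_hl T' (j+1)
     \<and> (\<forall>x\<in>col_hl T j. x \<le> a \<longrightarrow> x \<in> col_hl T' j)"
proof -
  note fin = InvD(1)[OF Inv]
  have I: "Inv T'" unfolding T' by (rule upd_Inv[OF Inv Tp1 ha rtr rt1 v1 v2 sub1 eqr L1 L2 L3 L4 L5])
  let ?T1 = "T((r,j) \<mapsto> h1)"
  have fin1: "finite (dom ?T1)" using fin by simp
  have e1: "arms ?T1 + tag j (harm h) = arms T + tag j (harm h1)"
    using arms_upd[OF fin, of "(r,j)" h1] Tp1 by simp
  have hsplit: "harm h = harm h1 + {#a#}" using hm1 ah by simp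
  have e1': "arms ?T1 + {#(j,a)#} = arms T"
    using e1 unfolding hsplit tag_add tag_single by (simp add: add.assoc[symmetric])
  have T1p2: "?T1 (rt,j+1) = T (rt,j+1)" by simp
  have e2: "arms T' = arms ?T1 + tag (j+1) (harm h2)"
  proof -
    have "arms T' + (case ?T1 (rt,j+1) of None \<Rightarrow> {#} | Some g \<Rightarrow> tag (snd (rt,j+1)) (harm g))
          = arms ?T1 + tag (snd (rt,j+1)) (harm h2)"
      unfolding T' by (rule arms_upd[OF fin1])
    moreover have "(case ?T1 (rt,j+1) of None \<Rightarrow> {#} | Some g \<Rightarrow> tag (snd (rt,j+1)) (harm g)) = {#}"
      using noarm by (cases "T (rt,j+1)") (auto simp: tag_empty)
    ultimately show ?thesis by simp
  qed
  have A: "arms T' + {#(j,a)#} = arms T + tag (j+1) (harm h2)"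
    using e1' e2 by (simp add: ac_simps)
  have D: "dom T' = insert (rt,j+1) (dom T)" unfolding T' using Tp1 by auto
  have U: "\<forall>p. snd p \<noteq> j \<longrightarrow> snd p \<noteq> j+1 \<longrightarrow> T' p = T p" unfolding T' by auto
  have C1: "a \<in> col_hl T' (j+1)" unfolding col_hl_def T' using a2 by force
  have C2: "\<forall>x\<in>col_hl T j. x \<le> a \<longrightarrow> x \<in> col_hl T' j"
  proof (intro ballI impI)
    fix x assume "x \<in> col_hl T j" "x \<le> a"
    then obtain r' h' where h': "T (r',j) = Some h'" "x = hx h' \<or> x \<in> hleg h'" unfolding col_hl_def by blast
    show "x \<in> col_hl T' j"
    proof (cases "r' = r")
      case True
      hence "h' = h" using h' Tp1 by simp
      hence "x = hx h1 \<or> x \<in> hleg h1" using h' hx1 hl1 \<open>x \<le> a\<close> by auto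
      moreover have "T' (r,j) = Some h1" unfolding T' by simp
      ultimately show ?thesis unfolding col_hl_def by blast
    next
      case False
      hence "T' (r',j) = Some h'" unfolding T' using h' by simp
      thus ?thesis unfolding col_hl_def using h' by blast
    qed
  qed
  show ?thesis using I A D U C1 C2 by blast
qed



lemma bump_step:
  assumes Inv: "Inv T" and ja: "(j,a) \<in># arms T" and allj: "\<forall>(x,y)\<in>#arms T. x \<le> j \<and> (x = j \<longrightarrow> y \<le> a)"
  defines "E \<equiv> {x \<in> col_entries T (j+1). a \<le> x}"
  shows "Inv (bump T) \<and> arms (bump T) + {#(j,a)#} = arms T + (if E = {} then {#} else {#(j+1, Min E)#})
     \<and> dom (bump T) = (if E = {} then insert (col_height T (j+1) + 1, j+1) (dom T) else dom T)
     \<and> (E = {} \<longrightarrow> (col_height T (j+1) + 1, j+1) \<notin> dom T)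
     \<and> (\<forall>p. snd p \<noteq> j \<longrightarrow> snd p \<noteq> j+1 \<longrightarrow> bump T p = T p)
     \<and> a \<in> col_hl (bump T) (j+1)
     \<and> (\<forall>x\<in>col_hl T j. x \<le> a \<longrightarrow> x \<in> col_hl (bump T) j)"
proof -
  let ?Th = ?thesis
  note fin = InvD(1)[OF Inv] and pos = InvD(2)[OF Inv] and dc = InvD(3)[OF Inv]
   and hv = InvD(4)[OF Inv] and rowT = InvD(5)[OF Inv] and colT = InvD(6)[OF Inv]
  define r where "r = bump_row T"
  obtain h where h: "T (r,j) = Some h" "a \<in># harm h" "maxarm h = a"
    using bump_row_props[OF Inv ja allj] unfolding r_def by blast
  define moved where "moved = {x \<in> hleg h. a < x \<and> x \<le> Max (hleg h)}"
  define kopt where "kopt = (if E = {} then None else Some (Min E))"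
  define rt where "rt = (case kopt of None \<Rightarrow> col_height T (j + 1) + 1
                 | Some k \<Rightarrow> (THE r'. \<exists>g. T (r', j + 1) = Some g \<and> k \<in> hook_entries g))"
  define newcell where "newcell = \<lparr>hx = a, hleg = {}, harm = {#}\<rparr>"
  define g where "g = (case T (rt, j + 1) of None \<Rightarrow> newcell | Some g \<Rightarrow> g)"
  define karm where "karm = (case kopt of None \<Rightarrow> {#} | Some k \<Rightarrow> {#k#})"
  have bT: "bump T = (if rt \<noteq> r then
           T((r, j) \<mapsto> h\<lparr>harm := harm h - {#a#}\<rparr>,
             (rt, j + 1) \<mapsto> (case kopt of None \<Rightarrow> newcell | Some k \<Rightarrow> replace_and_append g k a))
         else
           T((r, j) \<mapsto> h\<lparr>harm := harm h - {#a#}, hleg := hleg h - moved\<rparr>,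
             (rt, j + 1) \<mapsto> g\<lparr>hx := a, hleg := hleg g \<union> moved, harm := harm g + karm\<rparr>))"
    unfolding E_def moved_def kopt_def rt_def newcell_def g_def karm_def
    by (rule bump_unfold[OF Inv ja allj r_def h(1) h(3)])
  have vh: "valid_hook h" using hv h(1) .
  have hxa: "hx h \<le> a" using vh h(2) unfolding valid_hook_def by blast
  have a0: "0 < a" using vh hxa unfolding valid_hook_def by simp
  have r1: "1 \<le> r" and j1: "1 \<le> j" using pos[of r j] h(1) by auto
  have aeh: "a \<in> hook_entries h" using h(2) by (simp add: hook_entries_def)
  have noarm: "\<And>r' g. T (r',j+1) = Some g \<Longrightarrow> harm g = {#}"
  proof (rule ccontr)
    fix r' g assume "T (r',j+1) = Some g" "harm g \<noteq> {#}"
    then obtain y where "y \<in># harm g" by (meson multiset_nonemptyE)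
    hence "(j+1,y) \<in># arms T" using arms_mem[OF fin] \<open>T (r',j+1) = Some g\<close> by blast
    thus False using allj by auto
  qed
  have armle: "\<And>y. y \<in># harm h \<Longrightarrow> y \<le> a"
  proof -
    fix y assume "y \<in># harm h"
    hence "(j,y) \<in># arms T" using arms_mem[OF fin] h(1) by blast
    thus "y \<le> a" using allj by auto
  qed
  have hok: "hooks_ok T" using Inv by (simp add: Inv_def)
  have finE: "finite E" unfolding E_def using col_entries_finite[OF fin hok] by simp
  have inE: "\<And>r' g x. T (r',j+1) = Some g \<Longrightarrow> x \<in> hook_entries g \<Longrightarrow> a \<le> x \<Longrightarrow> x \<in> E"
    unfolding E_def col_entries_iff by blast
  have Ecol: "\<And>x. x \<in> E \<Longrightarrow> a \<le> x \<and> (\<exists>r' g. T (r',j+1) = Some g \<and> x \<in> hook_entries g)"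
    unfolding E_def col_entries_iff by blast
  define H where "H = col_height T (j+1)"
  have shT: "shape_ok (dom T)" using Inv by (simp add: Inv_def)
  have rows: "{r'. (r',j+1) \<in> dom T} = {1..H}" unfolding H_def col_height_def by (rule rows_set[OF shT])
  have rowr: "\<And>g'. T (r,j+1) = Some g' \<Longrightarrow> a \<le> hx g'"
  proof -
    fix g' assume g': "T (r,j+1) = Some g'"
    show "a \<le> hx g'" using rowT[OF h(1) g' _ aeh hx_in_entries] by simp
  qed
  have legfin: "finite (hleg h)" using vh unfolding valid_hook_def by blast
  have movedprop: "\<And>x. x \<in> hleg h \<Longrightarrow> x \<notin> moved \<Longrightarrow> x \<le> a"
  proof -
    fix x assume x: "x \<in> hleg h" "x \<notin> moved"
    have "x \<le> Max (hleg h)" by (rule Max_ge[OF legfin x(1)])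
    thus "x \<le> a" using x unfolding moved_def by auto
  qed
  have moved_sub: "moved \<subseteq> hleg h" unfolding moved_def by blast
  have moved_gt: "\<And>x. x \<in> moved \<Longrightarrow> a < x" unfolding moved_def by blast
  define h1a where "h1a = h\<lparr>harm := harm h - {#a#}\<rparr>"
  define h1b where "h1b = h1a\<lparr>hleg := hleg h - moved\<rparr>"
  have h1b_eq: "h\<lparr>harm := harm h - {#a#}, hleg := hleg h - moved\<rparr> = h1b"
    unfolding h1b_def h1a_def by simp
  have va: "valid_hook h1a" using vh unfolding h1a_def valid_hook_def by (auto dest: in_diffD)
  have vb: "valid_hook h1b" using vh unfolding h1b_def h1a_def valid_hook_def by (auto dest: in_diffD)
  have suba: "hook_entries h1a \<subseteq> hook_entries h" unfolding h1a_def hook_entries_def by (auto dest: in_diffD)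
  have subb: "hook_entries h1b \<subseteq> hook_entries h" unfolding h1b_def h1a_def hook_entries_def by (auto dest: in_diffD)
  have eqrb: "\<forall>x\<in>hook_entries h1b. x \<le> a"
  proof
    fix x assume "x \<in> hook_entries h1b"
    hence "x = hx h \<or> (x \<in> hleg h \<and> x \<notin> moved) \<or> x \<in># harm h - {#a#}"
      unfolding h1b_def h1a_def hook_entries_def by auto
    thus "x \<le> a" using hxa movedprop armle by (auto dest: in_diffD)
  qed
  have hma: "harm h1a = harm h - {#a#}" "hx h1a = hx h" "{x\<in>hleg h. x \<le> a} \<subseteq> hleg h1a"
    unfolding h1a_def by auto
  have hmb: "harm h1b = harm h - {#a#}" "hx h1b = hx h" "{x\<in>hleg h. x \<le> a} \<subseteq> hleg h1b"
    unfolding h1b_def h1a_def using moved_gt by (auto simp: not_less[symmetric])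
  have noarm': "\<forall>g. T (rt,j+1) = Some g \<longrightarrow> harm g = {#}" using noarm by blast
  have fin_step: "\<And>h2. Inv (bump T) \<and> arms (bump T) + {#(j,a)#} = arms T + tag (j+1) (harm h2)
     \<and> dom (bump T) = insert (rt,j+1) (dom T)
     \<and> (\<forall>p. snd p \<noteq> j \<longrightarrow> snd p \<noteq> j+1 \<longrightarrow> bump T p = T p)
     \<and> a \<in> col_hl (bump T) (j+1)
     \<and> (\<forall>x\<in>col_hl T j. x \<le> a \<longrightarrow> x \<in> col_hl (bump T) j)
     \<Longrightarrow> tag (j+1) (harm h2) = (if E = {} then {#} else {#(j+1, Min E)#})
     \<Longrightarrow> insert (rt,j+1) (dom T) = (if E = {} then insert (col_height T (j+1) + 1, j+1) (dom T) else dom T)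
     \<Longrightarrow> (E = {} \<longrightarrow> (col_height T (j+1) + 1, j+1) \<notin> dom T)
     \<Longrightarrow> ?Th"
  proof -
    fix h2
    assume R: "Inv (bump T) \<and> arms (bump T) + {#(j,a)#} = arms T + tag (j+1) (harm h2)
     \<and> dom (bump T) = insert (rt,j+1) (dom T)
     \<and> (\<forall>p. snd p \<noteq> j \<longrightarrow> snd p \<noteq> j+1 \<longrightarrow> bump T p = T p)
     \<and> a \<in> col_hl (bump T) (j+1)
     \<and> (\<forall>x\<in>col_hl T j. x \<le> a \<longrightarrow> x \<in> col_hl (bump T) j)"
     and e1: "tag (j+1) (harm h2) = (if E = {} then {#} else {#(j+1, Min E)#})"
     and e2: "insert (rt,j+1) (dom T) = (if E = {} then insert (col_height T (j+1) + 1, j+1) (dom T) else dom T)"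
     and e3: "E = {} \<longrightarrow> (col_height T (j+1) + 1, j+1) \<notin> dom T"
    show ?Th using R e3 unfolding e1[symmetric] e2[symmetric] by blast
  qed
  show ?thesis
  proof (cases "E = {}")
    case True
    have kN: "kopt = None" unfolding kopt_def using True by simp
    have rtH: "rt = H + 1" unfolding rt_def kN H_def by simp
    have TN: "T (rt, j+1) = None"
    proof -
      have "rt \<notin> {1..H}" using rtH by simp
      hence "(rt, j+1) \<notin> dom T" using rows by blast
      thus ?thesis by auto
    qed
    have gN: "g = newcell" unfolding g_def using TN by simp
    have rnot: "(r,j+1) \<notin> dom T"
    proof
      assume "(r,j+1) \<in> dom T"
      then obtain g' where g': "T (r,j+1) = Some g'" by auto
      have "hx g' \<in> E" using inE[OF g' hx_in_entries rowr[OF g']] .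
      thus False using True by simp
    qed
    have "r \<notin> {1..H}" using rnot rows by blast
    hence Hr: "H < r" using r1 by simp
    have rtr: "rt \<le> r" and rt1: "1 \<le> rt" using Hr rtH by auto
    have L3: "\<forall>r' c'. 1 \<le> r' \<longrightarrow> r' \<le> rt \<longrightarrow> 1 \<le> c' \<longrightarrow> c' \<le> j+1 \<longrightarrow> (r',c') \<noteq> (rt,j+1) \<longrightarrow> (r',c') \<in> dom T"
    proof (intro allI impI)
      fix r' c' assume a1: "1 \<le> r'" "r' \<le> rt" "1 \<le> c'" "c' \<le> j+1" "(r',c') \<noteq> (rt,j+1)"
      show "(r',c') \<in> dom T"
      proof (cases "c' \<le> j")
        case True
        have "(r,j) \<in> dom T" using h(1) by auto
        thus ?thesis using dc[OF _ a1(1) order_trans[OF a1(2) rtr] a1(3) True] by blast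
      next
        case False
        hence "c' = j+1" "r' \<noteq> rt" using a1 by auto
        hence "r' \<in> {1..H}" using a1 rtH by auto
        thus ?thesis using rows \<open>c' = j+1\<close> by blast
      qed
    qed
    have L4: "\<forall>r' c'. (r',c') \<in> dom T \<longrightarrow> \<not>(r' = rt \<and> j+1 < c') \<and> \<not>(c' = j+1 \<and> rt < r')"
    proof (intro allI impI conjI notI)
      fix r' c' assume a1: "(r',c') \<in> dom T" "r' = rt \<and> j+1 < c'"
      hence "(rt,j+1) \<in> dom T" using dc[OF a1(1), of rt "j+1"] rt1 by simp
      thus False using TN by auto
    next
      fix r' c' assume a1: "(r',c') \<in> dom T" "c' = j+1 \<and> rt < r'"
      hence "(rt,j+1) \<in> dom T" using dc[OF a1(1), of rt "j+1"] rt1 by simp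
      thus False using TN by auto
    qed
    have L5: "\<forall>r' g. r' < rt \<longrightarrow> T (r',j+1) = Some g \<longrightarrow> (\<forall>y\<in>hook_entries g. y < a)"
    proof (intro allI impI ballI)
      fix r' g' y assume a1: "r' < rt" "T (r',j+1) = Some g'" "y \<in> hook_entries g'"
      show "y < a"
      proof (rule ccontr)
        assume "\<not> y < a"
        hence "y \<in> E" using inE[OF a1(2) a1(3)] by simp
        thus False using True by simp
      qed
    qed
    have nd: "(col_height T (j+1) + 1, j+1) \<notin> dom T" using TN rtH H_def by auto
    show ?thesis
    proof (cases "rt = r")
      case False
      have bT': "bump T = T((r,j) \<mapsto> h1a, (rt,j+1) \<mapsto> newcell)"
        using bT False kN unfolding h1a_def by simp
      have vn: "valid_hook newcell" unfolding newcell_def valid_hook_def using a0 by simp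
      have enc: "hook_entries newcell = {a}" unfolding newcell_def hook_entries_def by simp
      have R: "Inv (bump T) \<and> arms (bump T) + {#(j,a)#} = arms T + tag (j+1) (harm newcell)
     \<and> dom (bump T) = insert (rt,j+1) (dom T)
     \<and> (\<forall>p. snd p \<noteq> j \<longrightarrow> snd p \<noteq> j+1 \<longrightarrow> bump T p = T p)
     \<and> a \<in> col_hl (bump T) (j+1)
     \<and> (\<forall>x\<in>col_hl T j. x \<le> a \<longrightarrow> x \<in> col_hl (bump T) j)"
      proof (rule assemble[OF Inv h(1) h(2) hxa rtr rt1 va vn suba _ _ _ _ _ L5 hma noarm' _ bT'])
        show "rt = r \<Longrightarrow> \<forall>x\<in>hook_entries h1a. x \<le> a" using False by simp
        show "\<forall>x\<in>hook_entries newcell. a \<le> x \<or> (\<exists>g. T (rt, j + 1) = Some g \<and> x \<in> hook_entries g)"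
          using enc by simp
        show "\<forall>g. T (rt, j + 1) = Some g \<longrightarrow> (\<forall>x\<in>hook_entries newcell. \<exists>y\<in>hook_entries g. x \<le> y)"
          using TN by simp
        show "T (rt, j + 1) = None \<Longrightarrow> \<forall>r' c'. 1 \<le> r' \<longrightarrow> r' \<le> rt \<longrightarrow> 1 \<le> c' \<longrightarrow> c' \<le> j + 1 \<longrightarrow> (r', c') \<noteq> (rt, j + 1) \<longrightarrow> (r', c') \<in> dom T"
          using L3 by blast
        show "T (rt, j + 1) = None \<Longrightarrow> \<forall>r' c'. (r', c') \<in> dom T \<longrightarrow> \<not> (r' = rt \<and> j + 1 < c') \<and> \<not> (c' = j + 1 \<and> rt < r')"
          using L4 by blast
        show "a = hx newcell \<or> a \<in> hleg newcell" unfolding newcell_def by simp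
      qed
      show ?thesis
        by (rule fin_step[OF R]) (use True nd rtH in \<open>simp_all add: newcell_def tag_empty H_def\<close>)
    next
      case rtr_eq: True
      define h2 where "h2 = newcell\<lparr>hx := a, hleg := {} \<union> moved, harm := {#} + {#}\<rparr>"
      have bT': "bump T = T((r,j) \<mapsto> h1b, (rt,j+1) \<mapsto> h2)"
        using bT rtr_eq kN gN h1b_eq unfolding h2_def karm_def by (simp add: newcell_def)
      have v2: "valid_hook h2" unfolding h2_def newcell_def valid_hook_def
        using a0 moved_gt finite_subset[OF moved_sub legfin] by auto
      have enc: "hook_entries h2 = insert a moved" unfolding h2_def newcell_def hook_entries_def by simp
      have R: "Inv (bump T) \<and> arms (bump T) + {#(j,a)#} = arms T + tag (j+1) (harm h2)
     \<and> dom (bump T) = insert (rt,j+1) (dom T)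
     \<and> (\<forall>p. snd p \<noteq> j \<longrightarrow> snd p \<noteq> j+1 \<longrightarrow> bump T p = T p)
     \<and> a \<in> col_hl (bump T) (j+1)
     \<and> (\<forall>x\<in>col_hl T j. x \<le> a \<longrightarrow> x \<in> col_hl (bump T) j)"
      proof (rule assemble[OF Inv h(1) h(2) hxa rtr rt1 vb v2 subb _ _ _ _ _ L5 hmb noarm' _ bT'])
        show "rt = r \<Longrightarrow> \<forall>x\<in>hook_entries h1b. x \<le> a" using eqrb by simp
        show "\<forall>x\<in>hook_entries h2. a \<le> x \<or> (\<exists>g. T (rt, j + 1) = Some g \<and> x \<in> hook_entries g)"
          unfolding enc using moved_gt by (auto simp: less_imp_le)
        show "\<forall>g. T (rt, j + 1) = Some g \<longrightarrow> (\<forall>x\<in>hook_entries h2. \<exists>y\<in>hook_entries g. x \<le> y)"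
          using TN by simp
        show "T (rt, j + 1) = None \<Longrightarrow> \<forall>r' c'. 1 \<le> r' \<longrightarrow> r' \<le> rt \<longrightarrow> 1 \<le> c' \<longrightarrow> c' \<le> j + 1 \<longrightarrow> (r', c') \<noteq> (rt, j + 1) \<longrightarrow> (r', c') \<in> dom T"
          using L3 by blast
        show "T (rt, j + 1) = None \<Longrightarrow> \<forall>r' c'. (r', c') \<in> dom T \<longrightarrow> \<not> (r' = rt \<and> j + 1 < c') \<and> \<not> (c' = j + 1 \<and> rt < r')"
          using L4 by blast
        show "a = hx h2 \<or> a \<in> hleg h2" unfolding h2_def by simp
      qed
      show ?thesis
        by (rule fin_step[OF R]) (use True nd rtH in \<open>simp_all add: h2_def tag_empty H_def\<close>)
    qed
  next
    case False
    define k where "k = Min E"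
    have kE: "k \<in> E" unfolding k_def using finE False by simp
    have kmin: "\<And>x. x \<in> E \<Longrightarrow> k \<le> x" unfolding k_def using finE by simp
    have ak: "a \<le> k" using Ecol[OF kE] by simp
    obtain r0 g0 where g0: "T (r0,j+1) = Some g0" "k \<in> hook_entries g0" using Ecol[OF kE] by blast
    have uniq: "\<And>r' g'. T (r',j+1) = Some g' \<and> k \<in> hook_entries g' \<Longrightarrow> r' = r0"
    proof -
      fix r' g' assume a1: "T (r',j+1) = Some g' \<and> k \<in> hook_entries g'"
      show "r' = r0"
      proof (rule ccontr)
        assume "r' \<noteq> r0"
        show False
        proof (cases "r' < r0")
          case True
          show False using colT[OF conjunct1[OF a1] g0(1) True conjunct2[OF a1] g0(2)] by simp
        next
          case False
          hence "r0 < r'" using \<open>r' \<noteq> r0\<close> by simp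
          show False using colT[OF g0(1) conjunct1[OF a1] \<open>r0 < r'\<close> g0(2) conjunct2[OF a1]] by simp
        qed
      qed
    qed
    have kS: "kopt = Some k" unfolding kopt_def k_def using False by simp
    have rt0: "rt = r0" unfolding rt_def kS option.case
    proof (rule the_equality)
      show "\<exists>g. T (r0, j + 1) = Some g \<and> k \<in> hook_entries g" using g0 by blast
      show "\<And>r'. \<exists>g. T (r', j + 1) = Some g \<and> k \<in> hook_entries g \<Longrightarrow> r' = r0" using uniq by blast
    qed
    have TS: "T (rt,j+1) = Some g0" using g0 rt0 by simp
    have gg: "g = g0" unfolding g_def using TS by simp
    have vg: "valid_hook g0" using hv g0(1) .
    have ng: "harm g0 = {#}" using noarm g0(1) .
    have khl: "k = hx g0 \<or> k \<in> hleg g0" using g0(2) ng unfolding hook_entries_def by simp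
    have rt1: "1 \<le> rt" using pos TS by auto
    have L5: "\<forall>r' g. r' < rt \<longrightarrow> T (r',j+1) = Some g \<longrightarrow> (\<forall>y\<in>hook_entries g. y < a)"
    proof (intro allI impI ballI)
      fix r' g' y assume a1: "r' < rt" "T (r',j+1) = Some g'" "y \<in> hook_entries g'"
      have "y < k" using colT[OF a1(2) TS a1(1) a1(3)] g0(2) by simp
      show "y < a"
      proof (rule ccontr)
        assume "\<not> y < a"
        hence "y \<in> E" using inE[OF a1(2) a1(3)] by simp
        thus False using kmin \<open>y < k\<close> by (meson not_le)
      qed
    qed
    have rtr: "rt \<le> r"
    proof (rule ccontr)
      assume "\<not> rt \<le> r"
      hence rr: "r < rt" by simp
      have "(rt,j+1) \<in> dom T" using TS by auto
      hence "(r,j+1) \<in> dom T" using dc[of rt "j+1" r "j+1"] r1 rr by simp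
      then obtain g1 where g1: "T (r,j+1) = Some g1" by auto
      have "k \<le> hx g1" using kmin inE[OF g1 hx_in_entries rowr[OF g1]] .
      moreover have "hx g1 < k" using colT[OF g1 TS rr hx_in_entries g0(2)] .
      ultimately show False by simp
    qed
    have L34: "T (rt,j+1) \<noteq> None" using TS by simp
    have ndom: "insert (rt,j+1) (dom T) = dom T" using TS by auto
    have tk: "tag (j+1) {#k#} = (if E = {} then {#} else {#(j+1, Min E)#})"
      using False by (simp add: tag_single k_def)
    show ?thesis
    proof (cases "rt = r")
      case False
      define h2 where "h2 = replace_and_append g0 k a"
      have bT': "bump T = T((r,j) \<mapsto> h1a, (rt,j+1) \<mapsto> h2)"
        using bT False kS gg unfolding h1a_def h2_def by simp
      have P: "valid_hook h2 \<and> hook_entries h2 \<subseteq> insert a (hook_entries g0) \<and> harm h2 = {#k#}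
               \<and> (a = hx h2 \<or> a \<in> hleg h2)"
      proof (cases "hx g0 = k")
        case True
        have e: "h2 = g0\<lparr>hx := a, harm := {#k#}\<rparr>" unfolding h2_def replace_and_append_def using True ng by simp
        show ?thesis unfolding e using vg a0 ak True g0(2) unfolding valid_hook_def hook_entries_def
          by auto
      next
        case hne: False
        hence kl: "k \<in> hleg g0" using khl by simp
        have e: "h2 = g0\<lparr>hleg := insert a (hleg g0 - {k}), harm := {#k#}\<rparr>"
          unfolding h2_def replace_and_append_def using hne kl ng by simp
        have hxk: "hx g0 < k" using vg kl unfolding valid_hook_def by blast
        have hxa0: "hx g0 < a"
        proof (rule ccontr)
          assume "\<not> hx g0 < a"
          hence "hx g0 \<in> E" using inE[OF g0(1) hx_in_entries] by simp
          thus False using kmin hxk by (meson not_le)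
        qed
        show ?thesis unfolding e using vg hxa0 hxk kl unfolding valid_hook_def hook_entries_def
          by auto
      qed
      have R: "Inv (bump T) \<and> arms (bump T) + {#(j,a)#} = arms T + tag (j+1) (harm h2)
     \<and> dom (bump T) = insert (rt,j+1) (dom T)
     \<and> (\<forall>p. snd p \<noteq> j \<longrightarrow> snd p \<noteq> j+1 \<longrightarrow> bump T p = T p)
     \<and> a \<in> col_hl (bump T) (j+1)
     \<and> (\<forall>x\<in>col_hl T j. x \<le> a \<longrightarrow> x \<in> col_hl (bump T) j)"
      proof (rule assemble[OF Inv h(1) h(2) hxa rtr rt1 va _ suba _ _ _ _ _ L5 hma noarm' _ bT'])
        show "valid_hook h2" using P by blast
        show "rt = r \<Longrightarrow> \<forall>x\<in>hook_entries h1a. x \<le> a" using False by simp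
        show "\<forall>x\<in>hook_entries h2. a \<le> x \<or> (\<exists>g. T (rt, j + 1) = Some g \<and> x \<in> hook_entries g)"
          using P TS by blast
        show "\<forall>g. T (rt, j + 1) = Some g \<longrightarrow> (\<forall>x\<in>hook_entries h2. \<exists>y\<in>hook_entries g. x \<le> y)"
          using P TS ak g0(2) by fastforce
        show "T (rt, j + 1) = None \<Longrightarrow> \<forall>r' c'. 1 \<le> r' \<longrightarrow> r' \<le> rt \<longrightarrow> 1 \<le> c' \<longrightarrow> c' \<le> j + 1 \<longrightarrow> (r', c') \<noteq> (rt, j + 1) \<longrightarrow> (r', c') \<in> dom T"
          using TS by simp
        show "T (rt, j + 1) = None \<Longrightarrow> \<forall>r' c'. (r', c') \<in> dom T \<longrightarrow> \<not> (r' = rt \<and> j + 1 < c') \<and> \<not> (c' = j + 1 \<and> rt < r')"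
          using TS by simp
        show "a = hx h2 \<or> a \<in> hleg h2" using P by blast
      qed
      show ?thesis
        by (rule fin_step[OF R]) (use False P tk ndom \<open>E \<noteq> {}\<close> in auto)
    next
      case rtr_eq: True
      have hxk: "hx g0 = k"
      proof -
        have "a \<le> hx g0" using rowr g0(1) rt0 rtr_eq by simp
        hence "k \<le> hx g0" using kmin inE[OF g0(1) hx_in_entries] by simp
        moreover have "hx g0 \<le> k" using hx_le_entries[OF vg g0(2)] .
        ultimately show ?thesis by simp
      qed
      define h2 where "h2 = g0\<lparr>hx := a, hleg := hleg g0 \<union> moved, harm := harm g0 + {#k#}\<rparr>"
      have bT': "bump T = T((r,j) \<mapsto> h1b, (rt,j+1) \<mapsto> h2)"
        using bT rtr_eq kS gg h1b_eq unfolding h2_def karm_def by simp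
      have v2: "valid_hook h2" unfolding h2_def using vg a0 ak hxk moved_gt finite_subset[OF moved_sub legfin] ng
        unfolding valid_hook_def by force
      have mle: "\<And>x. x \<in> moved \<Longrightarrow> x \<le> hx g0"
      proof -
        fix x assume "x \<in> moved"
        hence "x \<in> hook_entries h" using moved_sub unfolding hook_entries_def by blast
        thus "x \<le> hx g0" using rowT[OF h(1) g0(1)[unfolded rt0[symmetric] rtr_eq] _ _ hx_in_entries] by simp
      qed
      have enc: "hook_entries h2 = insert a (hleg g0 \<union> moved \<union> {k})"
        unfolding h2_def hook_entries_def using ng by auto
      have R: "Inv (bump T) \<and> arms (bump T) + {#(j,a)#} = arms T + tag (j+1) (harm h2)
     \<and> dom (bump T) = insert (rt,j+1) (dom T)
     \<and> (\<forall>p. snd p \<noteq> j \<longrightarrow> snd p \<noteq> j+1 \<longrightarrow> bump T p = T p)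
     \<and> a \<in> col_hl (bump T) (j+1)
     \<and> (\<forall>x\<in>col_hl T j. x \<le> a \<longrightarrow> x \<in> col_hl (bump T) j)"
      proof (rule assemble[OF Inv h(1) h(2) hxa rtr rt1 vb v2 subb _ _ _ _ _ L5 hmb noarm' _ bT'])
        show "rt = r \<Longrightarrow> \<forall>x\<in>hook_entries h1b. x \<le> a" using eqrb by simp
        show "\<forall>x\<in>hook_entries h2. a \<le> x \<or> (\<exists>g. T (rt, j + 1) = Some g \<and> x \<in> hook_entries g)"
          unfolding enc using TS moved_gt ak unfolding hook_entries_def by (auto simp: less_imp_le)
        show "\<forall>g. T (rt, j + 1) = Some g \<longrightarrow> (\<forall>x\<in>hook_entries h2. \<exists>y\<in>hook_entries g. x \<le> y)"
          unfolding enc using TS ak hxk mle unfolding hook_entries_def by fastforce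
        show "T (rt, j + 1) = None \<Longrightarrow> \<forall>r' c'. 1 \<le> r' \<longrightarrow> r' \<le> rt \<longrightarrow> 1 \<le> c' \<longrightarrow> c' \<le> j + 1 \<longrightarrow> (r', c') \<noteq> (rt, j + 1) \<longrightarrow> (r', c') \<in> dom T"
          using TS by simp
        show "T (rt, j + 1) = None \<Longrightarrow> \<forall>r' c'. (r', c') \<in> dom T \<longrightarrow> \<not> (r' = rt \<and> j + 1 < c') \<and> \<not> (c' = j + 1 \<and> rt < r')"
          using TS by simp
        show "a = hx h2 \<or> a \<in> hleg h2" unfolding h2_def by simp
      qed
      show ?thesis
        by (rule fin_step[OF R]) (use ng tk ndom \<open>E \<noteq> {}\<close> in \<open>auto simp: h2_def\<close>)
    qed
  qed
qed



lemma col_entries_cong: "(\<And>r. F (r,c) = G (r,c)) \<Longrightarrow> col_entries F c = col_entries G c"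
  unfolding col_entries_def by simp

lemma col_hl_cong: "(\<And>r. F (r,c) = G (r,c)) \<Longrightarrow> col_hl F c = col_hl G c"
  unfolding col_hl_def by simp

definition ins_res :: "tab \<Rightarrow> nat \<Rightarrow> nat \<Rightarrow> bool" where
  "ins_res T j a \<longleftrightarrow> (\<exists>n e v. 1 \<le> n \<and>
      (\<forall>d. 1 \<le> d \<longrightarrow> d < n \<longrightarrow> dom ((bump^^d) T) = dom T \<and> (bump^^d) T \<noteq> (bump^^(d-1)) T) \<and>
      dom ((bump^^n) T) = insert e (dom T) \<and> e \<notin> dom T \<and> snd e = j + n \<and>
      Inv ((bump^^n) T) \<and> arms ((bump^^n) T) + {#(j,a)#} = arms T \<and>
      v 0 = a \<and> mono v \<and> (\<forall>i. 1 \<le> i \<longrightarrow> i \<le> n \<longrightarrow> v (i-1) \<in> col_hl ((bump^^n) T) (j+i)) \<and>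
      (\<forall>x\<in>col_hl T j. x \<le> a \<longrightarrow> x \<in> col_hl ((bump^^n) T) j) \<and> (\<forall>p. snd p < j \<longrightarrow> (bump^^n) T p = T p) \<and>
      (\<forall>w L. mono w \<longrightarrow> a \<le> w 0 \<longrightarrow> (\<forall>i. 1 \<le> i \<longrightarrow> i \<le> L \<longrightarrow> w (i-1) \<in> col_entries T (j+i)) \<longrightarrow> L < n))"

lemma ins_resI:
  assumes "1 \<le> n"
   and "\<And>d. 1 \<le> d \<Longrightarrow> d < n \<Longrightarrow> dom ((bump^^d) T) = dom T"
   and "\<And>d. 1 \<le> d \<Longrightarrow> d < n \<Longrightarrow> (bump^^d) T \<noteq> (bump^^(d-1)) T"
   and "dom ((bump^^n) T) = insert e (dom T)" and "e \<notin> dom T" and "snd e = j + n"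
   and "Inv ((bump^^n) T)" and "arms ((bump^^n) T) + {#(j,a)#} = arms T"
   and "v 0 = a" and "mono v" and "\<And>i. 1 \<le> i \<Longrightarrow> i \<le> n \<Longrightarrow> v (i-1) \<in> col_hl ((bump^^n) T) (j+i)"
   and "\<And>x. x\<in>col_hl T j \<Longrightarrow> x \<le> a \<Longrightarrow> x \<in> col_hl ((bump^^n) T) j"
   and "\<And>p. snd p < j \<Longrightarrow> (bump^^n) T p = T p"
   and "\<And>w L. mono w \<Longrightarrow> a \<le> w 0 \<Longrightarrow> (\<forall>i. 1 \<le> i \<longrightarrow> i \<le> L \<longrightarrow> w (i-1) \<in> col_entries T (j+i)) \<Longrightarrow> L < n"
  shows "ins_res T j a"
  unfolding ins_res_def
  apply (rule exI[of _ n], rule exI[of _ e], rule exI[of _ v])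
  using assms by blast

lemma ins_path:
  "\<forall>T j a. Inv T \<longrightarrow> (j,a) \<in># arms T \<longrightarrow> (\<forall>(x,y)\<in>#arms T. x \<le> j \<and> (x = j \<longrightarrow> y \<le> a))
     \<longrightarrow> (\<forall>p\<in>dom T. snd p \<le> j + m) \<longrightarrow> ins_res T j a"
proof (induction m rule: less_induct)
  case (less m)
  show ?case
  proof (intro allI impI)
    fix T j a
    assume Inv: "Inv T" and ja: "(j,a) \<in># arms T" and allj: "\<forall>(x,y)\<in>#arms T. x \<le> j \<and> (x = j \<longrightarrow> y \<le> a)"
      and bnd: "\<forall>p\<in>dom T. snd p \<le> j + m"
    define E where "E = {x \<in> col_entries T (j+1). a \<le> x}"
    note S = bump_step[OF Inv ja allj, folded E_def]
    define T1 where "T1 = bump T"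
    have I1: "Inv T1" using S T1_def by blast
    have A1: "arms T1 + {#(j,a)#} = arms T + (if E = {} then {#} else {#(j+1, Min E)#})" using S T1_def by blast
    have D1: "dom T1 = (if E = {} then insert (col_height T (j+1) + 1, j+1) (dom T) else dom T)" using S T1_def by blast
    have N1: "E = {} \<longrightarrow> (col_height T (j+1) + 1, j+1) \<notin> dom T" using S by blast
    have U1: "\<forall>p. snd p \<noteq> j \<longrightarrow> snd p \<noteq> j+1 \<longrightarrow> T1 p = T p" using S T1_def by blast
    have C1: "a \<in> col_hl T1 (j+1)" using S T1_def by blast
    have C2: "\<forall>x\<in>col_hl T j. x \<le> a \<longrightarrow> x \<in> col_hl T1 j" using S T1_def by blast
    have Einc: "\<And>w. w \<in> col_entries T (j+1) \<Longrightarrow> a \<le> w \<Longrightarrow> w \<in> E" unfolding E_def by blast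
    show "ins_res T j a"
    proof (cases "E = {}")
      case True
      define e where "e = (col_height T (j+1) + 1, j+1)"
      show ?thesis
      proof (rule ins_resI[where n=1 and e=e and v="\<lambda>_. a"])
        show "1 \<le> (1::nat)" by simp
        show "\<And>d. 1 \<le> d \<Longrightarrow> d < 1 \<Longrightarrow> dom ((bump^^d) T) = dom T" by simp
        show "\<And>d. 1 \<le> d \<Longrightarrow> d < 1 \<Longrightarrow> (bump^^d) T \<noteq> (bump^^(d-1)) T" by simp
        show "dom ((bump^^1) T) = insert e (dom T)" using D1 True unfolding T1_def e_def by simp
        show "e \<notin> dom T" using N1 True e_def by simp
        show "snd e = j + 1" unfolding e_def by simp
        show "Inv ((bump^^1) T)" using I1 T1_def by simp
        show "arms ((bump^^1) T) + {#(j,a)#} = arms T" using A1 True T1_def by simp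
        show "(\<lambda>_. a) 0 = a" by simp
        show "mono (\<lambda>_::nat. a)" by (simp add: mono_def)
        show "\<And>i. 1 \<le> i \<Longrightarrow> i \<le> 1 \<Longrightarrow> (\<lambda>_. a) (i-1) \<in> col_hl ((bump^^1) T) (j+i)"
          using C1 T1_def by (simp add: le_antisym)
        show "\<And>x. x \<in> col_hl T j \<Longrightarrow> x \<le> a \<Longrightarrow> x \<in> col_hl ((bump^^1) T) j"
          using C2 T1_def by simp
        show "\<And>p. snd p < j \<Longrightarrow> (bump^^1) T p = T p" proof -
          fix p :: "nat \<times> nat" assume "snd p < j"
          hence "snd p \<noteq> j" "snd p \<noteq> j+1" by auto
          thus "(bump^^1) T p = T p" using U1[rule_format, of p] T1_def by simp
        qed
        fix w :: "nat \<Rightarrow> nat" and L :: nat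
        assume w: "mono w" "a \<le> w 0" "\<forall>i. 1 \<le> i \<longrightarrow> i \<le> L \<longrightarrow> w (i-1) \<in> col_entries T (j+i)"
        show "L < 1"
        proof (rule ccontr)
          assume "\<not> L < 1"
          hence "w 0 \<in> col_entries T (j+1)" using w(3)[rule_format, of 1] by simp
          thus False using Einc w(2) True by blast
        qed
      qed
    next
      case False
      define k where "k = Min E"
      have finE: "finite E" unfolding E_def
        using col_entries_finite[OF InvD(1)[OF Inv]] Inv by (simp add: Inv_def)
      have kE: "k \<in> E" unfolding k_def using finE False by simp
      have kmin: "\<And>x. x \<in> E \<Longrightarrow> k \<le> x" unfolding k_def using finE by simp
      have ak: "a \<le> k" using kE unfolding E_def by simp
      have A1': "arms T1 + {#(j,a)#} = arms T + {#(j+1,k)#}" using A1 False k_def by simp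
      have D1': "dom T1 = dom T" using D1 False by simp
      have ja1: "(j+1,k) \<in># arms T1"
      proof -
        have "(j+1,k) \<in># arms T1 + {#(j,a)#}" using A1' by simp
        thus ?thesis by auto
      qed
      have allj1: "\<forall>(x,y)\<in>#arms T1. x \<le> j+1 \<and> (x = j+1 \<longrightarrow> y \<le> k)"
      proof
        fix p assume "p \<in># arms T1"
        hence "p \<in># arms T + {#(j+1,k)#}" using A1' by (metis union_iff)
        thus "case p of (x,y) \<Rightarrow> x \<le> j+1 \<and> (x = j+1 \<longrightarrow> y \<le> k)" using allj by auto
      qed
      obtain r0 g0 where "T (r0, j+1) = Some g0" using kE unfolding E_def col_entries_iff by blast
      hence "(r0,j+1) \<in> dom T" by auto
      hence "snd (r0, j+1) \<le> j + m" using bnd by blast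
      hence "j + 1 \<le> j + m" by simp
      hence m1: "1 \<le> m" by simp
      have bnd1: "\<forall>p\<in>dom T1. snd p \<le> (j+1) + (m-1)" using bnd D1' m1 by auto
      have "ins_res T1 (j+1) k" using less.IH[of "m-1"] m1 I1 ja1 allj1 bnd1 by simp
      then obtain n' e v' where
        n1: "1 \<le> n'" and
        dd: "\<forall>d. 1 \<le> d \<longrightarrow> d < n' \<longrightarrow> dom ((bump^^d) T1) = dom T1 \<and> (bump^^d) T1 \<noteq> (bump^^(d-1)) T1" and
        de: "dom ((bump^^n') T1) = insert e (dom T1)" and ne: "e \<notin> dom T1" and se: "snd e = (j+1) + n'" and
        IF: "Inv ((bump^^n') T1)" and AF: "arms ((bump^^n') T1) + {#(j+1,k)#} = arms T1" and
        v0: "v' 0 = k" and mv: "mono v'" and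
        vc: "\<forall>i. 1 \<le> i \<longrightarrow> i \<le> n' \<longrightarrow> v' (i-1) \<in> col_hl ((bump^^n') T1) ((j+1)+i)" and
        pc: "\<forall>x\<in>col_hl T1 (j+1). x \<le> k \<longrightarrow> x \<in> col_hl ((bump^^n') T1) (j+1)" and
        pu: "\<forall>p. snd p < j+1 \<longrightarrow> (bump^^n') T1 p = T1 p" and
        cmp: "\<forall>w L. mono w \<longrightarrow> k \<le> w 0 \<longrightarrow> (\<forall>i. 1 \<le> i \<longrightarrow> i \<le> L \<longrightarrow> w (i-1) \<in> col_entries T1 ((j+1)+i)) \<longrightarrow> L < n'"
        unfolding ins_res_def by blast
      have pw: "\<And>d. (bump^^(Suc d)) T = (bump^^d) T1" unfolding T1_def by (simp only: funpow_Suc_right comp_apply)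
      define F where "F = (bump^^n') T1"
      have pwn: "(bump^^(Suc n')) T = F" using pw F_def by simp
      define v where "v = (\<lambda>i. if i = 0 then a else v' (i-1))"
      have T1neq: "T1 \<noteq> T"
      proof
        assume "T1 = T"
        hence "{#(j,a)#} = {#(j+1,k)#}" using A1' by simp
        thus False by simp
      qed
      show ?thesis
      proof (rule ins_resI[where n="Suc n'" and e=e and v=v])
        show "1 \<le> Suc n'" by simp
        fix d assume d: "1 \<le> d" "d < Suc n'"
        thus "dom ((bump^^d) T) = dom T"
        proof (cases "d = 1")
          case True thus ?thesis using D1' T1_def by simp
        next
          case False
          then obtain d' where "d = Suc d'" "1 \<le> d'" "d' < n'" using d by (cases d) auto
          have e1: "(bump^^d) T = (bump^^d') T1" unfolding \<open>d = Suc d'\<close> by (rule pw)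
          show ?thesis unfolding e1 using dd D1' \<open>1 \<le> d'\<close> \<open>d' < n'\<close> by blast
        qed
      next
        fix d assume d: "1 \<le> d" "d < Suc n'"
        show "(bump^^d) T \<noteq> (bump^^(d-1)) T"
        proof (cases "d = 1")
          case True thus ?thesis using T1neq T1_def by simp
        next
          case False
          then obtain d' where d': "d = Suc d'" "1 \<le> d'" "d' < n'" using d by (cases d) auto
          then obtain d'' where d'': "d' = Suc d''" by (cases d') auto
          have e1: "(bump^^d) T = (bump^^d') T1" unfolding d'(1) by (rule pw)
          have e2: "(bump^^(d-1)) T = (bump^^(d'-1)) T1" unfolding d'(1) d'' by (simp only: diff_Suc_1 pw)
          show ?thesis unfolding e1 e2 using dd d' by blast
        qed
      next
        show "dom ((bump^^(Suc n')) T) = insert e (dom T)" using pwn F_def de D1' by simp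
        show "e \<notin> dom T" using ne D1' by simp
        show "snd e = j + Suc n'" using se by simp
        show "Inv ((bump^^(Suc n')) T)" using pwn F_def IF by simp
        show "arms ((bump^^(Suc n')) T) + {#(j,a)#} = arms T"
        proof -
          have "arms F + {#(j+1,k)#} + {#(j,a)#} = arms T + {#(j+1,k)#}" using AF A1' F_def by simp
          hence "arms F + {#(j,a)#} = arms T" by (simp add: ac_simps)
          thus ?thesis using pwn by simp
        qed
        show "v 0 = a" unfolding v_def by simp
        show "mono v" unfolding mono_iff_le_Suc
        proof
          fix i show "v i \<le> v (Suc i)"
          proof (cases i)
            case 0 thus ?thesis unfolding v_def using v0 ak by simp
          next
            case (Suc i') thus ?thesis unfolding v_def using mv by (simp add: mono_def)
          qed
        qed
      next
        fix i assume i: "1 \<le> i" "i \<le> Suc n'"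
        show "v (i-1) \<in> col_hl ((bump^^(Suc n')) T) (j+i)"
        proof (cases "i = 1")
          case True
          have "a \<in> col_hl F (j+1)" using pc C1 ak F_def by (simp add: T1_def)
          thus ?thesis using True pwn v_def by simp
        next
          case False
          hence "v (i-1) = v' ((i-1)-1)" unfolding v_def using i by simp
          moreover have "v' ((i-1)-1) \<in> col_hl F ((j+1)+(i-1))" using vc[rule_format, of "i-1"] i False F_def by simp
          moreover have "(j+1)+(i-1) = j + i" using i by simp
          ultimately show ?thesis using pwn by simp
        qed
      next
        fix x assume x: "x \<in> col_hl T j" "x \<le> a"
        have "x \<in> col_hl T1 j" using C2 x T1_def by simp
        moreover have "col_hl F j = col_hl T1 j"
        proof (rule col_hl_cong)
          fix r show "F (r,j) = T1 (r,j)" unfolding F_def using pu[rule_format, of "(r,j)"] by simp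
        qed
        ultimately show "x \<in> col_hl ((bump^^(Suc n')) T) j" using pwn by simp
      next
        fix p :: "nat \<times> nat" assume "snd p < j"
        hence "snd p \<noteq> j" "snd p \<noteq> j+1" by auto
        hence "T1 p = T p" using U1[rule_format, of p] by simp
        moreover have "F p = T1 p" unfolding F_def using pu[rule_format, of p] \<open>snd p < j\<close> by simp
        ultimately show "(bump^^(Suc n')) T p = T p" unfolding pwn by simp
      next
        fix w :: "nat \<Rightarrow> nat" and L :: nat
        assume w: "mono w" "a \<le> w 0" "\<forall>i. 1 \<le> i \<longrightarrow> i \<le> L \<longrightarrow> w (i-1) \<in> col_entries T (j+i)"
        show "L < Suc n'"
        proof (cases "L = 0")
          case True thus ?thesis by simp
        next
          case False
          hence "w 0 \<in> col_entries T (j+1)" using w(3)[rule_format, of 1] by simp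
          hence kw: "k \<le> w 0" using kmin Einc w(2) by blast
          define w' where "w' = (\<lambda>i. w (Suc i))"
          have mw': "mono w'" using w(1) unfolding w'_def mono_def by simp
          have "w 0 \<le> w 1" using w(1) unfolding mono_def by simp
          hence kw': "k \<le> w' 0" using kw unfolding w'_def by simp
          have cw': "\<forall>i. 1 \<le> i \<longrightarrow> i \<le> L - 1 \<longrightarrow> w' (i-1) \<in> col_entries T1 ((j+1)+i)"
          proof (intro allI impI)
            fix i assume i: "1 \<le> i" "i \<le> L - 1"
            have "w i \<in> col_entries T (j + Suc i)" using w(3)[rule_format, of "Suc i"] i by simp
            moreover have "col_entries T1 (j + Suc i) = col_entries T (j + Suc i)"
            proof (rule col_entries_cong)
              fix r show "T1 (r, j + Suc i) = T (r, j + Suc i)" using U1[rule_format, of "(r, j + Suc i)"] i by simp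
            qed
            ultimately show "w' (i-1) \<in> col_entries T1 ((j+1)+i)" unfolding w'_def using i by simp
          qed
          have "L - 1 < n'" using cmp mw' kw' cw' by blast
          thus ?thesis by simp
        qed
      qed
    qed
  qed
qed



definition colmax :: "tab \<Rightarrow> nat" where "colmax P = Max (fst ` set_mset (arms P))"
definition valmax :: "tab \<Rightarrow> nat" where "valmax P = Max {y. (colmax P, y) \<in># arms P}"

lemma colmax_props:
  assumes "arms P \<noteq> {#}"
  shows "(colmax P, valmax P) \<in># arms P" and "\<forall>(x,y)\<in>#arms P. x \<le> colmax P \<and> (x = colmax P \<longrightarrow> y \<le> valmax P)"
proof -
  have f1: "finite (fst ` set_mset (arms P))" by simp
  have ne1: "fst ` set_mset (arms P) \<noteq> {}" using assms by simp
  have cin: "colmax P \<in> fst ` set_mset (arms P)" unfolding colmax_def using f1 ne1 by (rule Max_in)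
  have f2: "finite {y. (colmax P, y) \<in># arms P}"
  proof -
    have "{y. (colmax P, y) \<in># arms P} \<subseteq> snd ` set_mset (arms P)" by force
    thus ?thesis by (rule finite_subset) simp
  qed
  have ne2: "{y. (colmax P, y) \<in># arms P} \<noteq> {}" using cin by force
  show "(colmax P, valmax P) \<in># arms P"
    using Max_in[OF f2 ne2] unfolding valmax_def by simp
  show "\<forall>(x,y)\<in>#arms P. x \<le> colmax P \<and> (x = colmax P \<longrightarrow> y \<le> valmax P)"
  proof
    fix p assume p: "p \<in># arms P"
    obtain x y where xy: "p = (x,y)" by (cases p)
    have "x \<le> colmax P" unfolding colmax_def using p xy f1 by (metis Max_ge fst_conv image_eqI)
    moreover have "x = colmax P \<longrightarrow> y \<le> valmax P" unfolding valmax_def using p xy f2 by auto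
    ultimately show "case p of (x,y) \<Rightarrow> x \<le> colmax P \<and> (x = colmax P \<longrightarrow> y \<le> valmax P)" using xy by simp
  qed
qed

lemma ins_exists:
  assumes Inv: "Inv P" and ne: "arms P \<noteq> {#}"
  shows "ins_res P (colmax P) (valmax P)"
proof -
  note fin = InvD(1)[OF Inv]
  define m where "m = Max (snd ` dom P)"
  have "\<forall>p\<in>dom P. snd p \<le> colmax P + m"
  proof
    fix p assume "p \<in> dom P"
    hence "snd p \<le> m" unfolding m_def using fin by simp
    thus "snd p \<le> colmax P + m" by simp
  qed
  thus ?thesis using ins_path colmax_props[OF ne] Inv by blast
qed

lemma unc_step_eq:
  assumes Inv: "Inv P" and ne: "arms P \<noteq> {#}"
    and n1: "1 \<le> n"
    and dd: "\<forall>d. 1 \<le> d \<longrightarrow> d < n \<longrightarrow> dom ((bump^^d) P) = dom P \<and> (bump^^d) P \<noteq> (bump^^(d-1)) P"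
    and de: "dom ((bump^^n) P) = insert e (dom P)" and ne': "e \<notin> dom P"
  shows "unc_step (P,Q) = ((bump^^n) P, Q(e \<mapsto> int (snd e) - int (colmax P)))"
proof -
  have L: "(LEAST d. 1 \<le> d \<and> (dom ((bump ^^ d) P) \<noteq> dom ((bump ^^ (d - 1)) P) \<or> (bump ^^ d) P = (bump ^^ (d - 1)) P)) = n"
  proof (rule Least_equality)
    have "dom ((bump ^^ (n - 1)) P) = dom P"
    proof (cases "n = 1")
      case True thus ?thesis by simp
    next
      case False thus ?thesis using dd[rule_format, of "n-1"] n1 by simp
    qed
    thus "1 \<le> n \<and> (dom ((bump ^^ n) P) \<noteq> dom ((bump ^^ (n - 1)) P) \<or> (bump ^^ n) P = (bump ^^ (n - 1)) P)"
      using n1 de ne' by auto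
  next
    fix d assume d: "1 \<le> d \<and> (dom ((bump ^^ d) P) \<noteq> dom ((bump ^^ (d - 1)) P) \<or> (bump ^^ d) P = (bump ^^ (d - 1)) P)"
    show "n \<le> d"
    proof (rule ccontr)
      assume "\<not> n \<le> d"
      hence dn: "d < n" by simp
      have "dom ((bump ^^ (d - 1)) P) = dom P"
      proof (cases "d = 1")
        case True thus ?thesis by simp
      next
        case False
        hence "1 \<le> d - 1" "d - 1 < n" using d dn by auto
        thus ?thesis using dd[rule_format, of "d-1"] by blast
      qed
      thus False using dd[rule_format, of d] d dn by simp
    qed
  qed
  have U: "unc_ins P = (bump^^n) P" unfolding unc_ins_def L ..
  have bc: "bump_col P = colmax P" using bump_col_eq[OF Inv colmax_props[OF ne]] .
  have Th: "(THE x. x \<in> dom ((bump^^n) P) - dom P) = e"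
    using de ne' by (intro the_equality) auto
  show ?thesis unfolding unc_step_def Let_def U bc fst_conv snd_conv Th ..
qed



definition GI :: "nat list \<Rightarrow> tab \<times> qtab \<Rightarrow> bool" where
  "GI lam PQ \<longleftrightarrow> (let P = fst PQ; Q = snd PQ in
    Inv P \<and> young_cells lam \<subseteq> dom P \<and> (\<forall>r. (r,1) \<in> dom P \<longleftrightarrow> (r,1) \<in> young_cells lam)
    \<and> dom Q = dom P - young_cells lam
    \<and> (\<forall>p v. Q p = Some v \<longrightarrow> 0 < v \<and> v \<le> int (snd p) - 1)
    \<and> (\<forall>r c c' v w. Q (r,c) = Some v \<longrightarrow> Q (r,c') = Some w \<longrightarrow> c < c' \<longrightarrow> v < w)
    \<and> (\<forall>r r' c v w. Q (r,c) = Some v \<longrightarrow> Q (r',c) = Some w \<longrightarrow> r < r' \<longrightarrow> v < w)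
    \<and> (arms P \<noteq> {#} \<longrightarrow> (\<forall>p v. Q p = Some v \<longrightarrow> int (colmax P) \<le> int (snd p) - v))
    \<and> (arms P \<noteq> {#} \<longrightarrow> (\<forall>p v. Q p = Some v \<longrightarrow> int (snd p) - v = int (colmax P) \<longrightarrow>
          (\<exists>w. mono w \<and> valmax P \<le> w 0 \<and> (\<forall>i. 1 \<le> i \<longrightarrow> i \<le> nat v \<longrightarrow> w (i-1) \<in> col_entries P (colmax P + i))))))"

lemma GI_step:
  assumes G: "GI lam (P,Q)" and ne: "arms P \<noteq> {#}"
  shows "GI lam (unc_step (P,Q)) \<and> size (arms (fst (unc_step (P,Q)))) + 1 = size (arms P)"
proof -
  have GG: "Inv P \<and> young_cells lam \<subseteq> dom P \<and> (\<forall>r. (r,1) \<in> dom P \<longleftrightarrow> (r,1) \<in> young_cells lam)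
    \<and> dom Q = dom P - young_cells lam
    \<and> (\<forall>p v. Q p = Some v \<longrightarrow> 0 < v \<and> v \<le> int (snd p) - 1)
    \<and> (\<forall>r c c' v w. Q (r,c) = Some v \<longrightarrow> Q (r,c') = Some w \<longrightarrow> c < c' \<longrightarrow> v < w)
    \<and> (\<forall>r r' c v w. Q (r,c) = Some v \<longrightarrow> Q (r',c) = Some w \<longrightarrow> r < r' \<longrightarrow> v < w)
    \<and> (\<forall>p v. Q p = Some v \<longrightarrow> int (colmax P) \<le> int (snd p) - v)
    \<and> (\<forall>p v. Q p = Some v \<longrightarrow> int (snd p) - v = int (colmax P) \<longrightarrow>
          (\<exists>w. mono w \<and> valmax P \<le> w 0 \<and> (\<forall>i. 1 \<le> i \<longrightarrow> i \<le> nat v \<longrightarrow> w (i-1) \<in> col_entries P (colmax P + i))))"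
    using G ne unfolding GI_def Let_def fst_conv snd_conv by simp
  note GGs = conjunct1[OF GG] conjunct1[OF conjunct2[OF GG]] conjunct1[OF conjunct2[OF conjunct2[OF GG]]]
     conjunct1[OF conjunct2[OF conjunct2[OF conjunct2[OF GG]]]]
     conjunct1[OF conjunct2[OF conjunct2[OF conjunct2[OF conjunct2[OF GG]]]]]
     conjunct1[OF conjunct2[OF conjunct2[OF conjunct2[OF conjunct2[OF conjunct2[OF GG]]]]]]
     conjunct1[OF conjunct2[OF conjunct2[OF conjunct2[OF conjunct2[OF conjunct2[OF conjunct2[OF GG]]]]]]]
     conjunct1[OF conjunct2[OF conjunct2[OF conjunct2[OF conjunct2[OF conjunct2[OF conjunct2[OF conjunct2[OF GG]]]]]]]]
     conjunct2[OF conjunct2[OF conjunct2[OF conjunct2[OF conjunct2[OF conjunct2[OF conjunct2[OF conjunct2[OF GG]]]]]]]]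
  note Inv = GGs(1) and yl = GGs(2) and c1 = GGs(3) and dQ = GGs(4) and Qv = GGs(5) and Qr = GGs(6)
    and Qc = GGs(7) and G3 = GGs(8) and G4 = GGs(9)
  note fin = InvD(1)[OF Inv] and pos = InvD(2)[OF Inv] and dc = InvD(3)[OF Inv]
  define c where "c = colmax P"
  define M where "M = valmax P"
  have cM: "(c,M) \<in># arms P" using colmax_props(1)[OF ne] c_def M_def by simp
  have c1': "1 \<le> c"
  proof -
    obtain r h where "P (r,c) = Some h" using cM arms_mem[OF fin] by blast
    thus ?thesis using pos[of r c] by auto
  qed
  obtain n e v where
    n1: "1 \<le> n" and
    dd: "\<forall>d. 1 \<le> d \<longrightarrow> d < n \<longrightarrow> dom ((bump^^d) P) = dom P \<and> (bump^^d) P \<noteq> (bump^^(d-1)) P" and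
    de: "dom ((bump^^n) P) = insert e (dom P)" and ne': "e \<notin> dom P" and se: "snd e = c + n" and
    IF: "Inv ((bump^^n) P)" and AF: "arms ((bump^^n) P) + {#(c,M)#} = arms P" and
    v0: "v 0 = M" and mv: "mono v" and
    vc: "\<forall>i. 1 \<le> i \<longrightarrow> i \<le> n \<longrightarrow> v (i-1) \<in> col_hl ((bump^^n) P) (c+i)" and
    cmp: "\<forall>w L. mono w \<longrightarrow> M \<le> w 0 \<longrightarrow> (\<forall>i. 1 \<le> i \<longrightarrow> i \<le> L \<longrightarrow> w (i-1) \<in> col_entries P (c+i)) \<longrightarrow> L < n"
    using ins_exists[OF Inv ne] unfolding ins_res_def c_def[symmetric] M_def[symmetric] by blast
  define F where "F = (bump^^n) P"
  define Q' where "Q' = Q(e \<mapsto> int n)"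
  have US: "unc_step (P,Q) = (F, Q')"
    unfolding F_def Q'_def using unc_step_eq[OF Inv ne n1 dd de ne', of Q] se c_def by simp
  have dF: "dom F = insert e (dom P)" using de F_def by simp
  have sizeF: "size (arms F) + 1 = size (arms P)"
  proof -
    have "size (arms F + {#(c,M)#}) = size (arms P)" using AF F_def by simp
    thus ?thesis by simp
  qed
  have subF: "arms F \<subseteq># arms P" using AF F_def by (metis mset_subset_eq_add_left)
  have eY: "e \<notin> young_cells lam" using ne' yl by blast
  have noright: "\<And>x. (fst e, x) \<in> dom P \<Longrightarrow> x < snd e"
  proof (rule ccontr)
    fix x assume x: "(fst e, x) \<in> dom P" "\<not> x < snd e"
    have "1 \<le> fst e" using pos x(1) by blast
    hence "(fst e, snd e) \<in> dom P" using dc[OF x(1), of "fst e" "snd e"] x(2) se c1' by simp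
    thus False using ne' by simp
  qed
  have noabove: "\<And>y. (y, snd e) \<in> dom P \<Longrightarrow> y < fst e"
  proof (rule ccontr)
    fix y assume y: "(y, snd e) \<in> dom P" "\<not> y < fst e"
    have "1 \<le> fst e"
    proof -
      have "(1::nat) \<le> 1" by simp
      have "1 \<le> snd e" using se c1' by simp
      show ?thesis
      proof (rule ccontr)
        assume "\<not> 1 \<le> fst e"
        hence "fst e = 0" by simp
        have "Inv F" using IF F_def by simp
        hence "\<And>r c. (r,c) \<in> dom F \<Longrightarrow> 1 \<le> r \<and> 1 \<le> c" using InvD(2) by blast
        moreover have "(fst e, snd e) \<in> dom F" using dF by simp
        ultimately show False using \<open>fst e = 0\<close> by fastforce
      qed
    qed
    hence "(fst e, snd e) \<in> dom P" using dc[OF y(1), of "fst e" "snd e"] y(2) se c1' by simp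
    thus False using ne' by simp
  qed
  have cmpQ: "\<And>p v'. Q p = Some v' \<Longrightarrow> int (snd p) - v' = int c \<Longrightarrow> nat v' < n"
  proof -
    fix p v' assume a1: "Q p = Some v'" "int (snd p) - v' = int c"
    obtain w where w: "mono w" "M \<le> w 0" "\<forall>i. 1 \<le> i \<longrightarrow> i \<le> nat v' \<longrightarrow> w (i-1) \<in> col_entries P (c + i)"
      using G4 a1 c_def M_def by blast
    show "nat v' < n" using cmp w by blast
  qed
  have Qlt: "\<And>p v'. Q p = Some v' \<Longrightarrow> snd p \<le> snd e \<Longrightarrow> p \<noteq> e \<Longrightarrow> (snd p < snd e \<or> fst p < fst e) \<Longrightarrow> v' < int n"
  proof -
    fix p v' assume a1: "Q p = Some v'" "snd p \<le> snd e" "p \<noteq> e" "snd p < snd e \<or> fst p < fst e"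
    have g3: "int c \<le> int (snd p) - v'" using G3 a1(1) c_def by blast
    have vp: "0 < v'" using Qv a1(1) by blast
    show "v' < int n"
    proof (cases "int c = int (snd p) - v'")
      case True
      hence "nat v' < n" using cmpQ a1(1) by simp
      thus ?thesis using vp by simp
    next
      case False
      hence "int c < int (snd p) - v'" using g3 by simp
      thus ?thesis using a1(2) se by simp
    qed
  qed
  have dQP: "\<And>p. p \<in> dom Q \<Longrightarrow> p \<in> dom P" using dQ by blast
  have GF: "GI lam (F, Q')"
    unfolding GI_def Let_def fst_conv snd_conv
  proof (intro conjI)
    show "Inv F" using IF F_def by simp
    show "young_cells lam \<subseteq> dom F" using yl dF by blast
    show "\<forall>r. (r, 1) \<in> dom F \<longleftrightarrow> (r, 1) \<in> young_cells lam"
    proof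
      fix r
      have "e \<noteq> (r,1)" using se c1' n1 by auto
      thus "(r, 1) \<in> dom F \<longleftrightarrow> (r, 1) \<in> young_cells lam" using c1 dF by auto
    qed
    show "dom Q' = dom F - young_cells lam" unfolding Q'_def using dQ dF eY by auto
    show "\<forall>p v. Q' p = Some v \<longrightarrow> 0 < v \<and> v \<le> int (snd p) - 1"
      unfolding Q'_def using Qv n1 se c1' by auto
    show "\<forall>r c c' v w. Q' (r,c) = Some v \<longrightarrow> Q' (r,c') = Some w \<longrightarrow> c < c' \<longrightarrow> v < w"
    proof (intro allI impI)
      fix r x x' v' w' assume a1: "Q' (r,x) = Some v'" "Q' (r,x') = Some w'" "x < x'"
      show "v' < w'"
      proof (cases "(r,x') = e")
        case True
        hence "(r,x) \<noteq> e" using a1(3) by auto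
        hence "Q (r,x) = Some v'" using a1(1) unfolding Q'_def by simp
        moreover have "w' = int n" using a1(2) True unfolding Q'_def by simp
        ultimately show ?thesis using Qlt[of "(r,x)" v'] True a1(3) by auto
      next
        case False
        hence Qw: "Q (r,x') = Some w'" using a1(2) unfolding Q'_def by simp
        show ?thesis
        proof (cases "(r,x) = e")
          case True
          have "(r,x') \<in> dom P" using Qw dQP by blast
          hence "x' < snd e" using noright True by (metis fst_conv)
          thus ?thesis using True a1(3) by (metis snd_conv not_less_iff_gr_or_eq)
        next
          case False
          hence "Q (r,x) = Some v'" using a1(1) unfolding Q'_def by simp
          thus ?thesis using Qr Qw a1(3) by blast
        qed
      qed
    qed
    show "\<forall>r r' c v w. Q' (r,c) = Some v \<longrightarrow> Q' (r',c) = Some w \<longrightarrow> r < r' \<longrightarrow> v < w"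
    proof (intro allI impI)
      fix r r' x v' w' assume a1: "Q' (r,x) = Some v'" "Q' (r',x) = Some w'" "r < r'"
      show "v' < w'"
      proof (cases "(r',x) = e")
        case True
        hence "(r,x) \<noteq> e" using a1(3) by auto
        hence "Q (r,x) = Some v'" using a1(1) unfolding Q'_def by simp
        moreover have "w' = int n" using a1(2) True unfolding Q'_def by simp
        ultimately show ?thesis using Qlt[of "(r,x)" v'] True a1(3) by auto
      next
        case False
        hence Qw: "Q (r',x) = Some w'" using a1(2) unfolding Q'_def by simp
        show ?thesis
        proof (cases "(r,x) = e")
          case True
          have "(r',x) \<in> dom P" using Qw dQP by blast
          hence "r' < fst e" using noabove True by (metis snd_conv)
          thus ?thesis using True a1(3) by (metis fst_conv not_less_iff_gr_or_eq)
        next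
          case False
          hence "Q (r,x) = Some v'" using a1(1) unfolding Q'_def by simp
          thus ?thesis using Qc Qw a1(3) by blast
        qed
      qed
    qed
    show "arms F \<noteq> {#} \<longrightarrow> (\<forall>p v. Q' p = Some v \<longrightarrow> int (colmax F) \<le> int (snd p) - v)"
    proof (intro impI allI)
      fix p v' assume neF: "arms F \<noteq> {#}" and a1: "Q' p = Some v'"
      have "colmax F \<le> c"
      proof -
        have "(colmax F, valmax F) \<in># arms P" using colmax_props(1)[OF neF] subF by (meson mset_subset_eqD)
        thus ?thesis using colmax_props(2)[OF ne] c_def by auto
      qed
      moreover have "int c \<le> int (snd p) - v'"
      proof (cases "p = e")
        case True thus ?thesis using a1 se unfolding Q'_def by simp
      next
        case False
        hence "Q p = Some v'" using a1 unfolding Q'_def by simp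
        thus ?thesis using G3[rule_format, of p v'] c_def by simp
      qed
      ultimately show "int (colmax F) \<le> int (snd p) - v'" by simp
    qed
    show "arms F \<noteq> {#} \<longrightarrow> (\<forall>p v. Q' p = Some v \<longrightarrow> int (snd p) - v = int (colmax F) \<longrightarrow>
          (\<exists>w. mono w \<and> valmax F \<le> w 0 \<and> (\<forall>i. 1 \<le> i \<longrightarrow> i \<le> nat v \<longrightarrow> w (i-1) \<in> col_entries F (colmax F + i))))"
    proof (intro impI allI)
      fix p v' assume neF: "arms F \<noteq> {#}" and a1: "Q' p = Some v'" and a2: "int (snd p) - v' = int (colmax F)"
      have inP: "(colmax F, valmax F) \<in># arms P" using colmax_props(1)[OF neF] subF by (meson mset_subset_eqD)
      have cle: "colmax F \<le> c" using inP colmax_props(2)[OF ne] c_def by auto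
      have ge: "int c \<le> int (snd p) - v'"
      proof (cases "p = e")
        case True thus ?thesis using a1 se unfolding Q'_def by simp
      next
        case False
        hence "Q p = Some v'" using a1 unfolding Q'_def by simp
        thus ?thesis using G3[rule_format, of p v'] c_def by simp
      qed
      have ceq: "colmax F = c" using cle ge a2 by simp
      have vle: "valmax F \<le> M" using inP colmax_props(2)[OF ne] c_def M_def ceq by auto
      have Ln: "nat v' \<le> n"
      proof (cases "p = e")
        case True thus ?thesis using a1 unfolding Q'_def by simp
      next
        case False
        hence "Q p = Some v'" using a1 unfolding Q'_def by simp
        thus ?thesis using cmpQ a2 ceq by fastforce
      qed
      show "\<exists>w. mono w \<and> valmax F \<le> w 0 \<and> (\<forall>i. 1 \<le> i \<longrightarrow> i \<le> nat v' \<longrightarrow> w (i-1) \<in> col_entries F (colmax F + i))"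
      proof (intro exI[of _ v] conjI allI impI)
        show "mono v" using mv .
        show "valmax F \<le> v 0" using v0 vle by simp
        fix i assume "1 \<le> i" "i \<le> nat v'"
        thus "v (i-1) \<in> col_entries F (colmax F + i)" using vc Ln ceq F_def col_hl_sub by simp
      qed
    qed
  qed
  show ?thesis using GF sizeF US by simp
qed



lemma downset_eq:
  assumes fin: "finite S" and pos: "\<forall>x\<in>S. 1 \<le> x" and dcl: "\<forall>x\<in>S. \<forall>y. 1 \<le> y \<longrightarrow> y \<le> x \<longrightarrow> y \<in> S"
  shows "S = {1..card S}"
proof (cases "S = {}")
  case True thus ?thesis by simp
next
  case False
  have "S = {1..Max S}"
  proof
    show "S \<subseteq> {1..Max S}" using fin pos by auto
    show "{1..Max S} \<subseteq> S"
    proof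
      fix x assume x: "x \<in> {1..Max S}"
      have "Max S \<in> S" using fin False by (intro Max_in) auto
      thus "x \<in> S" using dcl x by auto
    qed
  qed
  thus ?thesis by (metis card_atLeastAtMost diff_Suc_1)
qed

lemma lam_mono:
  assumes "partition lam" "1 \<le> r'" "r' \<le> r" "r \<le> length lam"
  shows "lam ! (r - 1) \<le> lam ! (r' - 1)"
proof (cases "r' = r")
  case True thus ?thesis by simp
next
  case False
  hence "r' - 1 < r - 1" using assms by auto
  moreover have "r - 1 < length lam" using assms by auto
  ultimately show ?thesis using sorted_wrt_nth_less[of "(\<ge>)" lam "r'-1" "r-1"] assms(1)
    unfolding partition_def by blast
qed

lemma young_col1:
  assumes "partition lam"
  shows "(r,1) \<in> young_cells lam \<longleftrightarrow> 1 \<le> r \<and> r \<le> length lam"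
proof
  assume "(r,1) \<in> young_cells lam" thus "1 \<le> r \<and> r \<le> length lam" unfolding young_cells_def by simp
next
  assume r: "1 \<le> r \<and> r \<le> length lam"
  hence "r - 1 < length lam" by linarith
  hence "lam ! (r-1) \<in> set lam" by (rule nth_mem)
  hence "0 < lam ! (r-1)" using assms unfolding partition_def by blast
  thus "(r,1) \<in> young_cells lam" using r unfolding young_cells_def by simp
qed

lemma young_shape:
  assumes "partition lam"
  shows "shape_ok (young_cells lam)"
proof -
  have "young_cells lam \<subseteq> {1..length lam} \<times> {1..Max (insert 0 (set lam))}"
  proof
    fix p assume "p \<in> young_cells lam"
    then obtain r c where p: "p = (r,c)" "1 \<le> r" "r \<le> length lam" "1 \<le> c" "c \<le> lam ! (r-1)"
      unfolding young_cells_def by blast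
    have "r - 1 < length lam" using p by simp
    hence "lam ! (r-1) \<in> set lam" by (rule nth_mem)
    hence "lam ! (r-1) \<le> Max (insert 0 (set lam))" by simp
    hence "c \<le> Max (insert 0 (set lam))" using p(5) by linarith
    thus "p \<in> {1..length lam} \<times> {1..Max (insert 0 (set lam))}" using p by simp
  qed
  hence fin: "finite (young_cells lam)" by (rule finite_subset) simp
  have dc: "\<forall>r c r' c'. (r,c) \<in> young_cells lam \<longrightarrow> 1 \<le> r' \<longrightarrow> r' \<le> r \<longrightarrow> 1 \<le> c' \<longrightarrow> c' \<le> c \<longrightarrow> (r',c') \<in> young_cells lam"
  proof (intro allI impI)
    fix r c r' c' assume a: "(r,c) \<in> young_cells lam" "1 \<le> r'" "r' \<le> r" "1 \<le> c'" "c' \<le> c"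
    hence "1 \<le> r" "r \<le> length lam" "c \<le> lam ! (r-1)" unfolding young_cells_def by auto
    moreover have "lam ! (r - 1) \<le> lam ! (r' - 1)" using lam_mono[OF assms a(2) a(3)] calculation by simp
    ultimately show "(r',c') \<in> young_cells lam" using a unfolding young_cells_def by auto
  qed
  show ?thesis unfolding shape_ok_def using fin dc unfolding young_cells_def by auto
qed

lemma HVT_Inv:
  assumes lam: "partition lam" and H: "is_HVT lam T"
  shows "Inv T"
proof -
  have d: "dom T = young_cells lam" and hv: "\<forall>p h. T p = Some h \<longrightarrow> valid_hook h"
    and rw: "\<forall>r c c' A B. T (r, c) = Some A \<longrightarrow> T (r, c') = Some B \<longrightarrow> c < c' \<longrightarrow> Max (hook_entries A) \<le> Min (hook_entries B)"
    and cl: "\<forall>r r' c A C. T (r, c) = Some A \<longrightarrow> T (r', c) = Some C \<longrightarrow> r < r' \<longrightarrow> Max (hook_entries A) < Min (hook_entries C)"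
    using H unfolding is_HVT_def by blast+
  have fe: "\<And>p h. T p = Some h \<Longrightarrow> finite (hook_entries h)" using hv hook_entries_finite by blast
  have ne: "\<And>h. hook_entries h \<noteq> {}" by (auto simp: hook_entries_def)
  have ro: "rows_ok T" unfolding rows_ok_def
  proof (intro allI impI ballI)
    fix r c c' A B x y assume a: "T (r,c) = Some A" "T (r,c') = Some B" "c < c'" "x \<in> hook_entries A" "y \<in> hook_entries B"
    have "x \<le> Max (hook_entries A)" using fe[OF a(1)] a(4) by simp
    also have "\<dots> \<le> Min (hook_entries B)" using rw a by blast
    also have "\<dots> \<le> y" using fe[OF a(2)] a(5) by simp
    finally show "x \<le> y" .
  qed
  have co: "cols_ok T" unfolding cols_ok_def
  proof (intro allI impI ballI)
    fix r r' c A C x y assume a: "T (r,c) = Some A" "T (r',c) = Some C" "r < r'" "x \<in> hook_entries A" "y \<in> hook_entries C"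
    have "x \<le> Max (hook_entries A)" using fe[OF a(1)] a(4) by simp
    also have "\<dots> < Min (hook_entries C)" using cl a by blast
    also have "\<dots> \<le> y" using fe[OF a(2)] a(5) by simp
    finally show "x < y" .
  qed
  show ?thesis unfolding Inv_def hooks_ok_def using young_shape[OF lam] d hv ro co by simp
qed

lemma shape_to_young:
  assumes lam: "partition lam" and sh: "shape_ok D" and yl: "young_cells lam \<subseteq> D"
    and c1: "\<forall>r. (r,1) \<in> D \<longleftrightarrow> (r,1) \<in> young_cells lam"
  shows "\<exists>mu. D = young_cells mu \<and> partition mu \<and> length mu = length lam"
proof -
  have fin: "finite D" and pos: "\<forall>r c. (r,c) \<in> D \<longrightarrow> 1 \<le> r \<and> 1 \<le> c"
    and dc: "\<forall>r c r' c'. (r,c) \<in> D \<longrightarrow> 1 \<le> r' \<longrightarrow> r' \<le> r \<longrightarrow> 1 \<le> c' \<longrightarrow> c' \<le> c \<longrightarrow> (r',c') \<in> D"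
    using sh unfolding shape_ok_def by blast+
  define row where "row r = {c. (r,c) \<in> D}" for r
  have rowfin: "\<And>r. finite (row r)"
  proof -
    fix r have "row r = snd ` (D \<inter> {p. fst p = r})" unfolding row_def by force
    thus "finite (row r)" using fin by simp
  qed
  have roweq: "\<And>r. row r = {1..card (row r)}"
  proof -
    fix r show "row r = {1..card (row r)}"
    proof (rule downset_eq[OF rowfin])
      show "\<forall>x\<in>row r. 1 \<le> x" using pos unfolding row_def by blast
      show "\<forall>x\<in>row r. \<forall>y. 1 \<le> y \<longrightarrow> y \<le> x \<longrightarrow> y \<in> row r"
      proof (intro ballI allI impI)
        fix x y assume "x \<in> row r" "1 \<le> y" "y \<le> x"
        hence "(r,x) \<in> D" "1 \<le> r" using pos unfolding row_def by auto
        thus "y \<in> row r" using dc \<open>1 \<le> y\<close> \<open>y \<le> x\<close> unfolding row_def by blast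
      qed
    qed
  qed
  define mu where "mu = map (\<lambda>i. card (row (Suc i))) [0..<length lam]"
  have lm: "length mu = length lam" unfolding mu_def by simp
  have mun: "\<And>r. 1 \<le> r \<Longrightarrow> r \<le> length lam \<Longrightarrow> mu ! (r-1) = card (row r)"
  proof -
    fix r :: nat assume "1 \<le> r" "r \<le> length lam"
    hence "r - 1 < length lam" "Suc (r - 1) = r" by auto
    thus "mu ! (r-1) = card (row r)" unfolding mu_def by simp
  qed
  have inD_row: "\<And>r. (r,1) \<in> D \<longleftrightarrow> 1 \<le> r \<and> r \<le> length lam" using c1 young_col1[OF lam] by blast
  have DY: "D = young_cells mu"
  proof
    show "D \<subseteq> young_cells mu"
    proof
      fix p assume p: "p \<in> D"
      obtain r c where rc: "p = (r,c)" by (cases p)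
      have r1: "1 \<le> r" "1 \<le> c" using pos p rc by auto
      have "(r,1) \<in> D" using dc p rc r1 by blast
      hence rl: "r \<le> length lam" using inD_row by blast
      have "c \<in> row r" using p rc unfolding row_def by simp
      hence "c \<le> card (row r)" using roweq[of r] by auto
      thus "p \<in> young_cells mu" unfolding young_cells_def using rc r1 rl lm mun[OF r1(1) rl] by simp
    qed
    show "young_cells mu \<subseteq> D"
    proof
      fix p assume "p \<in> young_cells mu"
      then obtain r c where rc: "p = (r,c)" "1 \<le> r" "r \<le> length mu" "1 \<le> c" "c \<le> mu ! (r-1)"
        unfolding young_cells_def by blast
      hence "c \<le> card (row r)" using mun lm by simp
      hence "c \<in> row r" using roweq[of r] rc by auto
      thus "p \<in> D" using rc unfolding row_def by simp
    qed
  qed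
  have part: "partition mu"
    unfolding partition_def
  proof
    show "sorted_wrt (\<ge>) mu"
      unfolding sorted_wrt_iff_nth_less
    proof (intro allI impI)
      fix i j assume ij: "i < j" "j < length mu"
      have "row (Suc j) \<subseteq> row (Suc i)"
      proof
        fix x assume "x \<in> row (Suc j)"
        hence x: "(Suc j, x) \<in> D" unfolding row_def by simp
        hence "1 \<le> x" using pos by blast
        hence "(Suc i, x) \<in> D" using dc[rule_format, OF x, of "Suc i" x] ij by simp
        thus "x \<in> row (Suc i)" unfolding row_def by simp
      qed
      hence "card (row (Suc j)) \<le> card (row (Suc i))" using rowfin by (simp add: card_mono)
      thus "mu ! j \<le> mu ! i" unfolding mu_def using ij lm by simp
    qed
    show "\<forall>x\<in>set mu. 0 < x"
    proof
      fix x assume "x \<in> set mu"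
      then obtain i where i: "i < length lam" "x = card (row (Suc i))" unfolding mu_def by auto
      have "(Suc i, 1) \<in> D" using inD_row i by simp
      hence "1 \<in> row (Suc i)" unfolding row_def by simp
      thus "0 < x" using i rowfin card_gt_0_iff by blast
    qed
  qed
  show ?thesis using DY part lm by blast
qed



theorem lemma3p9:
  assumes "partition lam" and "is_HVT lam T"
  shows "\<exists>mu. dom (P_of T) = young_cells mu \<and> col_flagged_increasing lam mu (Q_of T)"
proof -
  have Inv: "Inv T" using HVT_Inv[OF assms] .
  have dT: "dom T = young_cells lam" using assms(2) unfolding is_HVT_def by blast
  define \<alpha> where "\<alpha> = arm_excess T"
  have al: "\<alpha> = size (arms T)" unfolding \<alpha>_def using arm_excess_size[OF InvD(1)[OF Inv]] .
  define S where "S i = (unc_step^^i) (T, Map.empty)" for i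
  have G0: "GI lam (T, Map.empty)"
    unfolding GI_def Let_def fst_conv snd_conv using Inv dT by simp
  have main: "\<And>i. i \<le> \<alpha> \<Longrightarrow> GI lam (S i) \<and> size (arms (fst (S i))) + i = \<alpha>"
  proof -
    fix i show "i \<le> \<alpha> \<Longrightarrow> GI lam (S i) \<and> size (arms (fst (S i))) + i = \<alpha>"
    proof (induction i)
      case 0 thus ?case using G0 al unfolding S_def by simp
    next
      case (Suc i)
      hence IH: "GI lam (S i)" "size (arms (fst (S i))) + i = \<alpha>" by auto
      have ne: "arms (fst (S i)) \<noteq> {#}" using IH(2) Suc.prems by auto
      have Si: "S i = (fst (S i), snd (S i))" by simp
      have G: "GI lam (fst (S i), snd (S i))" using IH(1) by simp
      have SS: "S (Suc i) = unc_step (fst (S i), snd (S i))" unfolding S_def by simp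
      show ?case using GI_step[OF G ne] IH(2) unfolding SS by simp
    qed
  qed
  have Gf: "GI lam (S \<alpha>)" using main by simp
  have U: "uncrowd T = S \<alpha>" unfolding uncrowd_def S_def \<alpha>_def ..
  define P where "P = fst (S \<alpha>)"
  define Q where "Q = snd (S \<alpha>)"
  have PP: "P_of T = P" unfolding P_of_def U P_def ..
  have QQ: "Q_of T = Q" unfolding Q_of_def U Q_def ..
  have GG: "Inv P \<and> young_cells lam \<subseteq> dom P \<and> (\<forall>r. (r,1) \<in> dom P \<longleftrightarrow> (r,1) \<in> young_cells lam)
    \<and> dom Q = dom P - young_cells lam
    \<and> (\<forall>p v. Q p = Some v \<longrightarrow> 0 < v \<and> v \<le> int (snd p) - 1)
    \<and> (\<forall>r c c' v w. Q (r,c) = Some v \<longrightarrow> Q (r,c') = Some w \<longrightarrow> c < c' \<longrightarrow> v < w)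
    \<and> (\<forall>r r' c v w. Q (r,c) = Some v \<longrightarrow> Q (r',c) = Some w \<longrightarrow> r < r' \<longrightarrow> v < w)"
    using Gf unfolding GI_def Let_def P_def Q_def by simp
  have sh: "shape_ok (dom P)" using GG unfolding Inv_def by blast
  have yl: "young_cells lam \<subseteq> dom P" using GG by blast
  have c1: "\<forall>r. (r,1) \<in> dom P \<longleftrightarrow> (r,1) \<in> young_cells lam" using GG by blast
  obtain mu where mu: "dom P = young_cells mu" "partition mu" "length mu = length lam"
    using shape_to_young[OF assms(1) sh yl c1] by blast
  have "col_flagged_increasing lam mu Q"
    unfolding col_flagged_increasing_def using assms(1) mu GG by auto
  thus ?thesis using mu PP QQ by blast
qed

end
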